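(* Let $\mathsf E$ be a closed subset of $\mathbb R$ whose gaps satisfy the three Craig-type conditions (with some $\delta>0$). Consider the space of sequences $y=(y_j)$, $y_j\in\mathbb R/\pi\mathbb Z$, with $\mu_j=a_j+\gamma_j\sin^2y_j$, equipped with the metric $\|y-\widetilde y\|=\sup_j\gamma_j^{1/2}|y_j-\widetilde y_j|$, and define vector fields $\Psi,\Xi$ by $$\Psi_j(y)=\Big(\tfrac12Q_1(y)+\mu_j\Big)W_j(y),\quad \Xi_j(y)=\Big(\tfrac{Q_2(y)}4+\tfrac18Q_1(y)^2-\tfrac12\mu_jQ_1(y)+\mu_j^2\Big)W_j(y),$$ with $Q_1=\sum_k(a_k+b_k-2\mu_k)$, $Q_2=\sum_k(a_k^2+b_k^2-2\mu_k^2)$, $W_j=\prod_{k\ne j}\sqrt{\frac{(a_k-\mu_j)(b_k-\mu_j)}{(\mu_k-\mu_j)^2}}$. Then $\Psi$ and $\Xi$ are Lipschitz: there is $L<\infty$ with $\sup_j\gamma_j^{1/2}|\Psi_j(y)-\Psi_j(\widetilde y)|\le L\|y-\widetilde y\|$ and likewise for $\Xi$.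
   Context: Gaps $G_j=(a_j,b_j)$ of $\mathsf E$, indexed by a countable set with a distinguished reference gap $G_0$; $\gamma_j=|G_j|$, $\eta_{jk}=\operatorname{dist}(G_j,G_k)$, $C_j=\sup_{z\in G_j}\big(\prod_{G_k<G_j}\frac{a_k-z}{b_k-z}\prod_{G_j<G_k}\frac{b_k-z}{a_k-z}\big)^{1/2}$ ($G_k<G_j$: $G_k$ lies left of $G_j$). Craig-type conditions: $\sum_k(1+\eta_{k0})C_k\gamma_k^{1/2}<\infty$; $\sup_j\sum_{k\neq j}C_j^3C_k^2(1+\eta_{0j}^2)\gamma_j^{1/2}\gamma_k^{1/2}/\eta_{jk}<\infty$; $\sup_j\sup_{k\ne j}\gamma_j^{1/2}\gamma_k^{1/2}/(\gamma_j^\delta\eta_{jk})<\infty$. $|\cdot|$ on $\mathbb R/\pi\mathbb Z$ is distance to $0$. *)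

theory Defs
  imports "HOL-Analysis.Analysis"
begin

text \<open>Gaps G_j = (a j, b j), j in an index set J (a subset of nat, hence countable),
  reference gap G_0 with index 0.\<close>

definition gam :: "(nat \<Rightarrow> real) \<Rightarrow> (nat \<Rightarrow> real) \<Rightarrow> nat \<Rightarrow> real" where
  "gam a b j = b j - a j"

definition eta :: "(nat \<Rightarrow> real) \<Rightarrow> (nat \<Rightarrow> real) \<Rightarrow> nat \<Rightarrow> nat \<Rightarrow> real" where
  "eta a b j k = setdist {a j<..<b j} {a k<..<b k}"

definition Cfac :: "(nat \<Rightarrow> real) \<Rightarrow> (nat \<Rightarrow> real) \<Rightarrow> nat \<Rightarrow> nat \<Rightarrow> real \<Rightarrow> real" where
  "Cfac a b j k z = (if b k \<le> a j then (a k - z) / (b k - z) else (b k - z) / (a k - z))"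

text \<open>All factors are \<ge> 1, so the infinite product is the supremum of the finite
  partial products (possibly +\<infinity>); C_j is an extended real.\<close>
definition Cc :: "(nat \<Rightarrow> real) \<Rightarrow> (nat \<Rightarrow> real) \<Rightarrow> nat set \<Rightarrow> nat \<Rightarrow> ereal" where
  "Cc a b J j = (SUP z\<in>{a j<..<b j}. SUP F\<in>{F. finite F \<and> F \<subseteq> J - {j}}.
                   ereal (sqrt (\<Prod>k\<in>F. Cfac a b j k z)))"

definition cdist :: "real \<Rightarrow> real" where
  "cdist x = \<bar>x - pi * of_int (round (x / pi))\<bar>"

definition mu :: "(nat \<Rightarrow> real) \<Rightarrow> (nat \<Rightarrow> real) \<Rightarrow> (nat \<Rightarrow> real) \<Rightarrow> nat \<Rightarrow> real" where
  "mu a b y j = a j + gam a b j * (sin (y j))\<^sup>2"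

definition Q1 :: "(nat \<Rightarrow> real) \<Rightarrow> (nat \<Rightarrow> real) \<Rightarrow> nat set \<Rightarrow> (nat \<Rightarrow> real) \<Rightarrow> real" where
  "Q1 a b J y = (\<Sum>\<^sub>\<infinity>k\<in>J. a k + b k - 2 * mu a b y k)"

definition Q2 :: "(nat \<Rightarrow> real) \<Rightarrow> (nat \<Rightarrow> real) \<Rightarrow> nat set \<Rightarrow> (nat \<Rightarrow> real) \<Rightarrow> real" where
  "Q2 a b J y = (\<Sum>\<^sub>\<infinity>k\<in>J. (a k)\<^sup>2 + (b k)\<^sup>2 - 2 * (mu a b y k)\<^sup>2)"

definition W :: "(nat \<Rightarrow> real) \<Rightarrow> (nat \<Rightarrow> real) \<Rightarrow> nat set \<Rightarrow> (nat \<Rightarrow> real) \<Rightarrow> nat \<Rightarrow> real" where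
  "W a b J y j = (\<Prod>k. if k \<in> J - {j} then
      sqrt (((a k - mu a b y j) * (b k - mu a b y j)) / (mu a b y k - mu a b y j)\<^sup>2) else 1)"

definition Psi :: "(nat \<Rightarrow> real) \<Rightarrow> (nat \<Rightarrow> real) \<Rightarrow> nat set \<Rightarrow> (nat \<Rightarrow> real) \<Rightarrow> nat \<Rightarrow> real" where
  "Psi a b J y j = (Q1 a b J y / 2 + mu a b y j) * W a b J y j"

definition Xi :: "(nat \<Rightarrow> real) \<Rightarrow> (nat \<Rightarrow> real) \<Rightarrow> nat set \<Rightarrow> (nat \<Rightarrow> real) \<Rightarrow> nat \<Rightarrow> real" where
  "Xi a b J y j = (Q2 a b J y / 4 + (Q1 a b J y)\<^sup>2 / 8 - mu a b y j * Q1 a b J y / 2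
                    + (mu a b y j)\<^sup>2) * W a b J y j"

definition ynorm :: "(nat \<Rightarrow> real) \<Rightarrow> (nat \<Rightarrow> real) \<Rightarrow> nat set \<Rightarrow> (nat \<Rightarrow> real) \<Rightarrow> (nat \<Rightarrow> real) \<Rightarrow> real" where
  "ynorm a b J y y' = (SUP j\<in>J. sqrt (gam a b j) * cdist (y j - y' j))"

end

theory Submission
  imports Defs
begin

lemma cdist_nonneg: "cdist x \<ge> 0" by (simp add: cdist_def)

lemma cdist_le: "cdist x \<le> pi/2"
proof -
  have "\<bar>of_int (round (x/pi)) - x/pi\<bar> \<le> 1/2" by (rule of_int_round_abs_le)
  hence "pi * \<bar>of_int (round (x/pi)) - x/pi\<bar> \<le> pi * (1/2)" by (simp add: mult_left_mono)
  moreover have "pi * \<bar>of_int (round (x/pi)) - x/pi\<bar> = \<bar>x - pi * of_int (round (x / pi))\<bar>"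
  proof -
    have "x - pi * of_int (round (x / pi)) = pi * (x/pi - of_int (round (x/pi)))" by (simp add: field_simps)
    thus ?thesis by (simp add: abs_mult abs_minus_commute)
  qed
  ultimately show ?thesis by (simp add: cdist_def)
qed

lemma sin_sq_diff: "\<bar>(sin u)\<^sup>2 - (sin v)\<^sup>2\<bar> \<le> cdist (u - v)"
proof -
  define n where "n = round ((u - v)/pi)"
  define r where "r = (u - v) - pi * of_int n"
  have cd: "cdist (u - v) = \<bar>r\<bar>" by (simp add: cdist_def r_def n_def)
  have "sin (u - v) = sin (r + pi * of_int n)" by (simp add: r_def)
  also have "\<dots> = sin r * cos (pi * of_int n)" by (simp add: sin_add)
  finally have "\<bar>sin (u - v)\<bar> = \<bar>sin r\<bar>" by (simp add: abs_mult)
  also have "\<dots> \<le> \<bar>r\<bar>" by (rule abs_sin_x_le_abs_x)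
  finally have s1: "\<bar>sin (u - v)\<bar> \<le> cdist (u - v)" using cd by simp
  have e1: "sin (u - v) * sin (u + v) = (sin u * cos v)^2 - (cos u * sin v)^2"
    unfolding sin_diff sin_add by (simp add: power2_eq_square algebra_simps)
  have "(sin u)\<^sup>2 - (sin v)\<^sup>2 = sin (u - v) * sin (u + v)"
    unfolding e1 power_mult_distrib cos_squared_eq by (simp add: algebra_simps)
  hence "\<bar>(sin u)\<^sup>2 - (sin v)\<^sup>2\<bar> = \<bar>sin (u - v)\<bar> * \<bar>sin (u + v)\<bar>" by (simp add: abs_mult)
  also have "\<dots> \<le> \<bar>sin (u - v)\<bar> * 1" by (intro mult_left_mono) auto
  finally show ?thesis using s1 by simp
qed


definition Pf :: "real \<Rightarrow> real \<Rightarrow> real \<Rightarrow> real \<Rightarrow> real" where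
  "Pf a b m z = ((a - z) * (b - z)) / (m - z)\<^sup>2"

lemma flipdiv: "(x - y)/(u - v) = (y - x)/(v - (u::real))"
proof -
  have "(y - x)/(v - u) = (-(x - y))/(-(u - v))" by simp
  also have "\<dots> = (x - y)/(u - v)" by (rule minus_divide_divide)
  finally show ?thesis by simp
qed

lemma left_bounds:
  assumes "a \<le> m" "m \<le> b" "a < b" "\<eta> > 0" "b + \<eta> \<le> z"
  shows "Pf a b m z > 0" "Pf a b m z \<le> (a - z)/(b - z)" "(b - z)/(a - z) \<le> Pf a b m z"
    "(a - z)/(b - z) \<le> 1 + (b - a)/\<eta>"
proof -
  have u: "z - b \<ge> \<eta>" using assms by simp
  have p: "Pf a b m z = ((z - a) * (z - b)) / (z - m)\<^sup>2"
    by (simp add: Pf_def power2_commute algebra_simps)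
  have zm: "z - m \<ge> z - b" "z - m \<le> z - a" "z - b > 0" using assms by auto
  show "Pf a b m z > 0" unfolding p using assms by auto
  have "(z - b)\<^sup>2 \<le> (z - m)\<^sup>2" using zm by (intro power_mono) auto
  hence "((z - a) * (z - b)) / (z - m)\<^sup>2 \<le> ((z - a) * (z - b)) / (z - b)\<^sup>2"
    using zm assms by (intro divide_left_mono) auto
  also have "\<dots> = (z - a)/(z - b)" using zm by (simp add: power2_eq_square)
  finally show "Pf a b m z \<le> (a - z)/(b - z)" unfolding p
    by (simp add: flipdiv[of z a])
  have "(z - m)\<^sup>2 \<le> (z - a)\<^sup>2" using zm by (intro power_mono) auto
  hence "((z - a) * (z - b)) / (z - a)\<^sup>2 \<le> ((z - a) * (z - b)) / (z - m)\<^sup>2"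
    using zm assms by (intro divide_left_mono) auto
  moreover have "((z - a) * (z - b)) / (z - a)\<^sup>2 = (z - b)/(z - a)" using zm assms by (simp add: power2_eq_square)
  ultimately show "(b - z)/(a - z) \<le> Pf a b m z" unfolding p
    by (simp add: flipdiv[of b z])
  have "(a - z)/(b - z) = 1 + (b - a)/(z - b)" using zm by (simp add: field_simps)
  also have "(b - a)/(z - b) \<le> (b - a)/\<eta>" using assms u by (intro divide_left_mono) auto
  finally show "(a - z)/(b - z) \<le> 1 + (b - a)/\<eta>" by simp
qed

lemma left_ln_abs:
  assumes "a \<le> m" "m \<le> b" "a < b" "\<eta> > 0" "b + \<eta> \<le> z"
  shows "\<bar>ln (Pf a b m z)\<bar> \<le> (b - a)/\<eta>"
proof -
  note L = left_bounds[OF assms]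
  have q: "(a - z)/(b - z) > 0" "(b - z)/(a - z) > 0" using assms by (auto intro: divide_neg_neg)
  have "ln (Pf a b m z) \<le> ln ((a - z)/(b - z))" using L q by simp
  also have "\<dots> \<le> (a - z)/(b - z) - 1" using q by (intro ln_le_minus_one) 
  finally have 1: "ln (Pf a b m z) \<le> (b - a)/\<eta>" using L by simp
  have "- ln (Pf a b m z) \<le> - ln ((b - z)/(a - z))" using L q by simp
  also have "- ln ((b - z)/(a - z)) = ln ((a - z)/(b - z))" using q
    by (simp add: ln_div)
  also have "\<dots> \<le> (a - z)/(b - z) - 1" using q by (intro ln_le_minus_one) 
  finally have 2: "- ln (Pf a b m z) \<le> (b - a)/\<eta>" using L by simp
  show ?thesis using 1 2 by simp
qed

lemma ln_lip:
  fixes x y \<eta> :: real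
  assumes "x \<ge> \<eta>" "y \<ge> \<eta>" "\<eta> > 0"
  shows "\<bar>ln x - ln y\<bar> \<le> \<bar>x - y\<bar>/\<eta>"
proof -
  have *: "ln u - ln v \<le> \<bar>u - v\<bar>/\<eta>" if "u \<ge> \<eta>" "v \<ge> \<eta>" for u v :: real
  proof -
    have "u > 0" "v > 0" using that assms by auto
    hence "ln u - ln v = ln (u/v)" by (simp add: ln_div)
    also have "\<dots> \<le> u/v - 1" using that assms by (intro ln_le_minus_one) auto
    also have "\<dots> = (u - v)/v" using that assms by (simp add: field_simps)
    also have "\<dots> \<le> \<bar>u - v\<bar>/v" using that assms by (intro divide_right_mono) auto
    also have "\<dots> \<le> \<bar>u - v\<bar>/\<eta>" using that assms by (intro divide_left_mono) auto
    finally show ?thesis .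
  qed
  show ?thesis using *[of x y] *[of y x] assms by (auto simp: abs_minus_commute)
qed

lemma deriv_bound:
  fixes a b m t \<eta> :: real
  assumes "a \<le> m" "m \<le> b" "a < b" "\<eta> > 0" "b + \<eta> \<le> t"
  shows "\<bar>1/(t - a) + 1/(t - b) - 2/(t - m)\<bar> \<le> (b - a)/\<eta>\<^sup>2"
proof -
  define u where "u = t - b"
  define g where "g = b - a"
  define w where "w = t - m"
  have u: "u \<ge> \<eta>" and g: "g > 0" and w: "u \<le> w" "w \<le> u + g"
    unfolding u_def g_def w_def using assms by auto
  have ta: "t - a = u + g" by (simp add: u_def g_def)
  have upos: "u > 0" using u assms by simp
  have key: "1/u - 1/(u+g) = g/(u*(u+g))" using upos g by (simp add: field_simps)
  have "g/(u*(u+g)) \<le> g/(\<eta>*\<eta>)"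
    using upos g u assms by (intro divide_left_mono mult_mono) auto
  hence kb: "1/u - 1/(u+g) \<le> g/\<eta>\<^sup>2" using key by (simp add: power2_eq_square)
  have w1: "2/w \<ge> 2/(u+g)" using w upos by (intro divide_left_mono) auto
  have w2: "2/w \<le> 2/u" using w upos by (intro divide_left_mono) auto
  have "1/(t - a) + 1/(t - b) - 2/(t - m) = 1/(u+g) + 1/u - 2/w"
    by (simp add: ta u_def w_def)
  thus ?thesis using w1 w2 kb by (simp add: g_def abs_le_iff)
qed

lemma left_lip:
  assumes "a \<le> m" "m \<le> b" "a \<le> m'" "m' \<le> b" "a < b" "\<eta> > 0" "b + \<eta> \<le> z" "b + \<eta> \<le> z'"
  shows "\<bar>ln (Pf a b m z) - ln (Pf a b m' z')\<bar> \<le> (b - a)/\<eta>\<^sup>2 * \<bar>z - z'\<bar> + 2 * \<bar>m - m'\<bar>/\<eta>"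
proof -
  define \<phi> where "\<phi> = (\<lambda>m t. ln (t - a) + ln (t - b) - 2 * ln (t - m))"
  have lnP: "ln (Pf a b m z) = \<phi> m z" if "a \<le> m" "m \<le> b" "b + \<eta> \<le> z" for m z
  proof -
    have pos: "z - a > 0" "z - b > 0" "z - m > 0" using that assms by auto
    have "Pf a b m z = ((z - a) * (z - b)) / (z - m)\<^sup>2"
      by (simp add: Pf_def power2_commute algebra_simps)
    thus ?thesis using pos by (simp add: \<phi>_def ln_div ln_mult ln_realpow)
  qed
  have mvt: "\<bar>\<phi> m z1 - \<phi> m z2\<bar> \<le> (b - a)/\<eta>\<^sup>2 * \<bar>z1 - z2\<bar>"
    if z12: "b + \<eta> \<le> z1" "z1 < z2" for z1 z2
  proof -
    have "\<exists>\<xi>. z1 < \<xi> \<and> \<xi> < z2 \<and> \<phi> m z2 - \<phi> m z1 = (z2 - z1) * (1/(\<xi> - a) + 1/(\<xi> - b) - 2/(\<xi> - m))"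
    proof (rule MVT2[OF z12(2)])
      fix x assume x: "z1 \<le> x" "x \<le> z2"
      have pos: "x - a > 0" "x - b > 0" "x - m > 0" using x z12 assms by auto
      show "(\<phi> m has_real_derivative (1/(x - a) + 1/(x - b) - 2/(x - m))) (at x)"
        unfolding \<phi>_def using pos
        by (auto intro!: derivative_eq_intros simp: field_simps)
    qed
    then obtain \<xi> where xi: "z1 < \<xi>" "\<xi> < z2"
      "\<phi> m z2 - \<phi> m z1 = (z2 - z1) * (1/(\<xi> - a) + 1/(\<xi> - b) - 2/(\<xi> - m))" by blast
    have db: "\<bar>1/(\<xi> - a) + 1/(\<xi> - b) - 2/(\<xi> - m)\<bar> \<le> (b - a)/\<eta>\<^sup>2"
      using xi z12 assms by (intro deriv_bound) auto
    have "\<bar>\<phi> m z1 - \<phi> m z2\<bar> = \<bar>z2 - z1\<bar> * \<bar>1/(\<xi> - a) + 1/(\<xi> - b) - 2/(\<xi> - m)\<bar>"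
      by (subst abs_minus_commute) (simp add: xi(3) abs_mult)
    also have "\<dots> \<le> \<bar>z2 - z1\<bar> * ((b - a)/\<eta>\<^sup>2)" using db by (intro mult_left_mono) auto
    finally show ?thesis by (simp add: abs_minus_commute mult.commute)
  qed
  have part1: "\<bar>\<phi> m z - \<phi> m z'\<bar> \<le> (b - a)/\<eta>\<^sup>2 * \<bar>z - z'\<bar>"
  proof (cases z z' rule: linorder_cases)
    case less thus ?thesis using mvt[of z z'] assms by auto
  next
    case equal thus ?thesis by simp
  next
    case greater thus ?thesis using mvt[of z' z] assms by (simp add: abs_minus_commute)
  qed
  have "\<bar>ln (z' - m) - ln (z' - m')\<bar> \<le> \<bar>(z' - m) - (z' - m')\<bar>/\<eta>"
    using assms by (intro ln_lip) auto
  hence part2: "\<bar>\<phi> m z' - \<phi> m' z'\<bar> \<le> 2 * \<bar>m - m'\<bar>/\<eta>"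
    by (simp add: \<phi>_def abs_minus_commute)
  have "ln (Pf a b m z) - ln (Pf a b m' z') = (\<phi> m z - \<phi> m z') + (\<phi> m z' - \<phi> m' z')"
    using lnP assms by simp
  thus ?thesis using part1 part2 by linarith
qed

lemma Pf_neg: "Pf (-b) (-a) (-m) (-z) = Pf a b m z"
proof -
  have 1: "(-m - -z)\<^sup>2 = (m - z)\<^sup>2" by (simp add: power2_eq_square algebra_simps)
  have 2: "(-b - -z) * (-a - -z) = (a - z) * (b - z)" by (simp add: algebra_simps)
  show ?thesis unfolding Pf_def 1 2 ..
qed

lemma term_facts:
  assumes "a \<le> m" "m \<le> b" "a \<le> m'" "m' \<le> b" "a < b" "\<eta> > 0"
    and side: "(b + \<eta> \<le> z \<and> b + \<eta> \<le> z') \<or> (z + \<eta> \<le> a \<and> z' + \<eta> \<le> a)"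
  shows "Pf a b m z > 0 \<and> \<bar>ln (Pf a b m z)\<bar> \<le> (b - a)/\<eta> \<and>
    \<bar>ln (Pf a b m z) - ln (Pf a b m' z')\<bar> \<le> (b - a)/\<eta>\<^sup>2 * \<bar>z - z'\<bar> + 2 * \<bar>m - m'\<bar>/\<eta>"
  using side
proof
  assume l: "b + \<eta> \<le> z \<and> b + \<eta> \<le> z'"
  have 1: "Pf a b m z > 0" using left_bounds(1)[OF assms(1,2,5,6)] l by simp
  have 2: "\<bar>ln (Pf a b m z)\<bar> \<le> (b - a)/\<eta>" using left_ln_abs[OF assms(1,2,5,6)] l by simp
  have 3: "\<bar>ln (Pf a b m z) - ln (Pf a b m' z')\<bar> \<le> (b - a)/\<eta>\<^sup>2 * \<bar>z - z'\<bar> + 2 * \<bar>m - m'\<bar>/\<eta>"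
    using left_lip[OF assms(1-6)] l by simp
  show ?thesis using 1 2 3 by simp
next
  assume r: "z + \<eta> \<le> a \<and> z' + \<eta> \<le> a"
  have h: "-b \<le> -m" "-m \<le> -a" "-b \<le> -m'" "-m' \<le> -a" "-b < -a" "-a + \<eta> \<le> -z" "-a + \<eta> \<le> -z'"
    using assms r by linarith+
  have 1: "Pf (-b) (-a) (-m) (-z) > 0" using left_bounds(1)[OF h(1,2,5) assms(6) h(6)] .
  have 2: "\<bar>ln (Pf (-b) (-a) (-m) (-z))\<bar> \<le> (-a - -b)/\<eta>"
    using left_ln_abs[OF h(1,2,5) assms(6) h(6)] .
  have 3: "\<bar>ln (Pf (-b) (-a) (-m) (-z)) - ln (Pf (-b) (-a) (-m') (-z'))\<bar>
      \<le> (-a - -b)/\<eta>\<^sup>2 * \<bar>-z - -z'\<bar> + 2 * \<bar>-m - -m'\<bar>/\<eta>"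
    using left_lip[OF h(1-5) assms(6) h(6,7)] .
  have e: "-a - -b = b - a" "\<bar>-z - -z'\<bar> = \<bar>z - z'\<bar>" "\<bar>-m - -m'\<bar> = \<bar>m - m'\<bar>" by linarith+
  show ?thesis using 1 2 3 unfolding Pf_neg e by simp
qed

lemma term_cfac:
  assumes "a \<le> m" "m \<le> b" "a < b" "\<eta> > 0"
  shows "b + \<eta> \<le> z \<Longrightarrow> Pf a b m z \<le> (a - z)/(b - z)"
    "z + \<eta> \<le> a \<Longrightarrow> Pf a b m z \<le> (b - z)/(a - z)"
proof -
  show "b + \<eta> \<le> z \<Longrightarrow> Pf a b m z \<le> (a - z)/(b - z)" using left_bounds(2)[OF assms] .
  assume r: "z + \<eta> \<le> a"
  have h: "-b \<le> -m" "-m \<le> -a" "-b < -a" "-a + \<eta> \<le> -z" using assms r by linarith+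
  have "Pf (-b) (-a) (-m) (-z) \<le> (-b - -z)/(-a - -z)" using left_bounds(2)[OF h(1-3) assms(4) h(4)] .
  hence "Pf a b m z \<le> (z - b)/(z - a)" unfolding Pf_neg by simp
  thus "Pf a b m z \<le> (b - z)/(a - z)" by (simp add: flipdiv[of b z])
qed


lemma has_sum_diff_real:
  fixes f g :: "'a \<Rightarrow> real"
  assumes "(f has_sum x) A" "(g has_sum y) A"
  shows "((\<lambda>k. f k - g k) has_sum (x - y)) A"
proof -
  have "((\<lambda>k. - g k) has_sum (- y)) A" using assms(2) by (simp add: has_sum_uminus)
  from has_sum_add[OF assms(1) this] show ?thesis by simp
qed

lemma summable_dom:
  fixes f h :: "'a \<Rightarrow> real"
  assumes "h summable_on A" "\<And>x. x \<in> A \<Longrightarrow> \<bar>f x\<bar> \<le> h x"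
  shows "f summable_on A"
proof -
  have "(\<lambda>x. norm (f x)) summable_on A"
    by (rule summable_on_comparison_test[OF assms(1)]) (use assms(2) in auto)
  thus ?thesis by (rule abs_summable_summable)
qed

lemma infsum_abs_dom:
  fixes f h :: "'a \<Rightarrow> real"
  assumes "h summable_on A" "\<And>x. x \<in> A \<Longrightarrow> \<bar>f x\<bar> \<le> h x"
  shows "\<bar>infsum f A\<bar> \<le> infsum h A"
proof -
  have "f summable_on A" using summable_dom assms by blast
  from norm_infsum_le[OF has_sum_infsum[OF this] has_sum_infsum[OF assms(1)]] assms(2)
  show ?thesis by simp
qed

lemma infsum_diff_dom:
  fixes f g h :: "'a \<Rightarrow> real"
  assumes "f summable_on A" "g summable_on A" "h summable_on A"
    "\<And>x. x \<in> A \<Longrightarrow> \<bar>f x - g x\<bar> \<le> h x"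
  shows "\<bar>infsum f A - infsum g A\<bar> \<le> infsum h A"
proof -
  have "((\<lambda>k. f k - g k) has_sum (infsum f A - infsum g A)) A"
    by (intro has_sum_diff_real has_sum_infsum assms)
  from norm_infsum_le[OF this has_sum_infsum[OF assms(3)]] assms(4)
  show ?thesis by simp
qed

lemma infsum_single_le:
  fixes f :: "'a \<Rightarrow> real"
  assumes "f summable_on A" "\<And>x. x \<in> A \<Longrightarrow> f x \<ge> 0" "k \<in> A"
  shows "f k \<le> infsum f A"
proof -
  have "infsum f {k} \<le> infsum f A"
    by (rule infsum_mono_neutral) (use assms in auto)
  thus ?thesis by simp
qed

lemma exp_diff_le:
  fixes A B C :: real
  assumes "exp A \<le> C" "exp B \<le> C"
  shows "\<bar>exp A - exp B\<bar> \<le> C * \<bar>A - B\<bar>"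
proof -
  have *: "exp x - exp y \<le> C * (x - y)" if "y \<le> x" "exp x \<le> C" for x y :: real
  proof -
    have "1 + (y - x) \<le> exp (y - x)" by (rule exp_ge_add_one_self)
    hence "1 - exp (y - x) \<le> x - y" by linarith
    hence "exp x * (1 - exp (y - x)) \<le> exp x * (x - y)" by (intro mult_left_mono) auto
    also have "\<dots> \<le> C * (x - y)" using that by (intro mult_right_mono) auto
    finally show ?thesis by (simp add: algebra_simps exp_diff)
  qed
  show ?thesis
  proof (cases "B \<le> A")
    case True thus ?thesis using *[of B A] assms by simp
  next
    case False thus ?thesis using *[of A B] assms by (simp add: abs_minus_commute)
  qed
qed


locale gapsys =
  fixes a b :: "nat \<Rightarrow> real" and J :: "nat set" and \<delta> :: real
  assumes J0: "0 \<in> J"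
    and ab: "\<forall>j\<in>J. a j < b j"
    and dpos: "\<delta> > 0"
    and Cfin: "\<forall>k\<in>J. Cc a b J k < \<infinity>"
    and S1: "(\<lambda>k. (1 + eta a b k 0) * real_of_ereal (Cc a b J k) * sqrt (gam a b k)) summable_on J"
    and S2: "\<exists>M. \<forall>j\<in>J.
           (\<lambda>k. (real_of_ereal (Cc a b J j))^3 * (real_of_ereal (Cc a b J k))\<^sup>2
                 * (1 + (eta a b 0 j)\<^sup>2) * sqrt (gam a b j) * sqrt (gam a b k) / eta a b j k)
             summable_on (J - {j}) \<and>
           (\<Sum>\<^sub>\<infinity>k\<in>J - {j}. (real_of_ereal (Cc a b J j))^3 * (real_of_ereal (Cc a b J k))\<^sup>2
                 * (1 + (eta a b 0 j)\<^sup>2) * sqrt (gam a b j) * sqrt (gam a b k) / eta a b j k) \<le> M"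
    and S3: "\<exists>M. \<forall>j\<in>J. \<forall>k\<in>J. k \<noteq> j \<longrightarrow>
           sqrt (gam a b j) * sqrt (gam a b k) \<le> M * (gam a b j powr \<delta> * eta a b j k)"
begin

definition "CC k = real_of_ereal (Cc a b J k)"
definition "sg k = sqrt (gam a b k)"
definition "ee k = eta a b k 0"
definition "T1 = infsum (\<lambda>k. (1 + ee k) * CC k * sg k) J"
definition "R0 = 1 + \<bar>a 0\<bar> + gam a b 0 + T1\<^sup>2"

lemma gpos: "k \<in> J \<Longrightarrow> gam a b k > 0"
  using ab by (simp add: gam_def)

lemma sgpos: "k \<in> J \<Longrightarrow> sg k > 0"
  using gpos by (simp add: sg_def)

lemma sg_sq: "sg k * sg k = gam a b k" if "k \<in> J"
  using gpos[OF that] by (simp add: sg_def)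

lemma ee_nonneg: "ee k \<ge> 0" by (simp add: ee_def eta_def)

lemma eta_nonneg: "eta a b j k \<ge> 0" by (simp add: eta_def)

lemma eta_sym: "eta a b j k = eta a b k j" by (simp add: eta_def setdist_sym)

lemma Cprod_open:
  assumes "j \<in> J" "z \<in> {a j<..<b j}" "finite F" "F \<subseteq> J - {j}"
  shows "ereal (sqrt (\<Prod>k\<in>F. Cfac a b j k z)) \<le> Cc a b J j"
  unfolding Cc_def
  by (rule SUP_upper2[OF assms(2)], rule SUP_upper2[of F]) (use assms in auto)

lemma Cc_ge1: "k \<in> J \<Longrightarrow> 1 \<le> Cc a b J k"
proof -
  assume k: "k \<in> J"
  have "(a k + b k)/2 \<in> {a k<..<b k}" using ab k by auto
  from Cprod_open[OF k this, of "{}"] show ?thesis by (simp add: one_ereal_def)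
qed

lemma CC_eq: "k \<in> J \<Longrightarrow> Cc a b J k = ereal (CC k)"
proof -
  assume k: "k \<in> J"
  have "1 \<le> Cc a b J k" "Cc a b J k < \<infinity>" using Cc_ge1[OF k] Cfin k by auto
  thus ?thesis unfolding CC_def by (cases "Cc a b J k") auto
qed

lemma CC_ge1: "k \<in> J \<Longrightarrow> CC k \<ge> 1"
  using Cc_ge1 CC_eq by (metis ereal_less_eq(3) one_ereal_def)

lemma Cprod_open_real:
  assumes "j \<in> J" "z \<in> {a j<..<b j}" "finite F" "F \<subseteq> J - {j}"
  shows "sqrt (\<Prod>k\<in>F. Cfac a b j k z) \<le> CC j"
  using Cprod_open[OF assms] CC_eq[OF assms(1)] by simp

lemma term1_nonneg: "k \<in> J \<Longrightarrow> (1 + ee k) * CC k * sg k \<ge> 0"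
proof -
  assume k: "k \<in> J"
  have "1 + ee k \<ge> 0" "CC k \<ge> 0" "sg k \<ge> 0" using ee_nonneg[of k] CC_ge1[OF k] sgpos[OF k] by auto
  thus ?thesis by (intro mult_nonneg_nonneg) auto
qed

lemma eC_ge1: "k \<in> J \<Longrightarrow> 1 \<le> (1 + ee k) * CC k"
proof -
  assume k: "k \<in> J"
  have "1 * 1 \<le> (1 + ee k) * CC k" using ee_nonneg[of k] CC_ge1[OF k] by (intro mult_mono) auto
  thus ?thesis by simp
qed

lemma sg_le_term1: "k \<in> J \<Longrightarrow> sg k \<le> (1 + ee k) * CC k * sg k"
  using mult_right_mono[OF eC_ge1, of k "sg k"] sgpos[of k] by simp

lemma S1': "(\<lambda>k. (1 + ee k) * CC k * sg k) summable_on J"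
  using S1 by (simp add: ee_def CC_def sg_def)

lemma T1_ge: "k \<in> J \<Longrightarrow> (1 + ee k) * CC k * sg k \<le> T1"
  unfolding T1_def by (rule infsum_single_le[OF S1']) (use term1_nonneg in auto)

lemma T1_nonneg: "T1 \<ge> 0"
  using T1_ge[OF J0] term1_nonneg[OF J0] by linarith

lemma bounds1:
  assumes "k \<in> J"
  shows "sg k \<le> T1" "CC k * sg k \<le> T1" "(1 + ee k) * sg k \<le> T1" "gam a b k \<le> T1 * sg k"
    "gam a b k \<le> T1\<^sup>2"
proof -
  have t: "(1 + ee k) * CC k * sg k \<le> T1" by (rule T1_ge[OF assms])
  have c: "CC k \<ge> 1" "ee k \<ge> 0" "sg k > 0" using CC_ge1 ee_nonneg sgpos assms by auto
  have "(1 + ee k) * sg k \<le> (1 + ee k) * CC k * sg k"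
    using c by (simp add: mult_le_cancel_left1 mult.assoc mult_left_mono)
  thus 3: "(1 + ee k) * sg k \<le> T1" using t by linarith
  have "CC k * sg k \<le> (1 + ee k) * CC k * sg k" using c by (simp add: mult.assoc)
  thus "CC k * sg k \<le> T1" using t by linarith
  have "sg k \<le> (1 + ee k) * sg k" using c by simp
  thus 1: "sg k \<le> T1" using 3 by linarith
  have "gam a b k = sg k * sg k" using sg_sq assms by simp
  also have "\<dots> \<le> T1 * sg k" using 1 c by (intro mult_right_mono) auto
  finally show 4: "gam a b k \<le> T1 * sg k" .
  also have "\<dots> \<le> T1 * T1" using 1 T1_nonneg by (intro mult_left_mono) auto
  finally show "gam a b k \<le> T1\<^sup>2" by (simp add: power2_eq_square)
qed

lemma sg_summable: "sg summable_on J" and sg_sum: "infsum sg J \<le> T1"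
proof -
  show 1: "sg summable_on J"
    by (rule summable_on_comparison_test[OF S1'])
      (use sgpos sg_le_term1 in \<open>auto intro: less_imp_le\<close>)
  show "infsum sg J \<le> T1" unfolding T1_def
  proof (rule infsum_mono[OF 1 S1'])
    fix k assume k: "k \<in> J"
    have c: "CC k \<ge> 1" "ee k \<ge> 0" "sg k > 0" using CC_ge1 ee_nonneg sgpos k by auto
    have "sg k \<le> (1 + ee k) * sg k" using c by simp
    also have "\<dots> \<le> (1 + ee k) * CC k * sg k"
      using c by (simp add: mult_le_cancel_left1 mult.assoc mult_left_mono)
    finally show "sg k \<le> (1 + ee k) * CC k * sg k" .
  qed
qed

lemma esg_summable: "(\<lambda>k. (1 + ee k) * sg k) summable_on J"
  and esg_sum: "infsum (\<lambda>k. (1 + ee k) * sg k) J \<le> T1"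
proof -
  have le: "(1 + ee k) * sg k \<le> (1 + ee k) * CC k * sg k" if k: "k \<in> J" for k
  proof -
    have c: "CC k \<ge> 1" "ee k \<ge> 0" "sg k > 0" using CC_ge1 ee_nonneg sgpos k by auto
    thus ?thesis by (simp add: mult_le_cancel_left1 mult.assoc mult_left_mono)
  qed
  show 1: "(\<lambda>k. (1 + ee k) * sg k) summable_on J"
  proof (rule summable_on_comparison_test[OF S1' le])
    fix k assume k: "k \<in> J"
    show "0 \<le> (1 + ee k) * sg k" using sgpos[OF k] ee_nonneg[of k] by simp
  qed
  show "infsum (\<lambda>k. (1 + ee k) * sg k) J \<le> T1" unfolding T1_def
    by (rule infsum_mono[OF 1 S1' le])
qed

end

lemma inv_cancel: "(c::real) > 0 \<Longrightarrow> 1 / c * c = 1" by simp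

context gapsys begin

lemma eta_pos: assumes "j \<in> J" "k \<in> J" "j \<noteq> k" shows "eta a b j k > 0"
proof -
  obtain M where M: "\<forall>j\<in>J. \<forall>k\<in>J. k \<noteq> j \<longrightarrow>
           sqrt (gam a b j) * sqrt (gam a b k) \<le> M * (gam a b j powr \<delta> * eta a b j k)"
    using S3 by blast
  have le: "sqrt (gam a b j) * sqrt (gam a b k) \<le> M * (gam a b j powr \<delta> * eta a b j k)"
    using M assms by auto
  have "sqrt (gam a b j) * sqrt (gam a b k) > 0" using gpos assms by auto
  show ?thesis
  proof (rule ccontr)
    assume "\<not> eta a b j k > 0"
    hence "eta a b j k = 0" using eta_nonneg[of j k] by linarith
    thus False using le \<open>_ > 0\<close> by simp
  qed
qed

lemma eta_le_dist:
  assumes "j \<in> J" "k \<in> J" "x \<in> {a j..b j}" "w \<in> {a k..b k}"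
  shows "eta a b j k \<le> \<bar>x - w\<bar>"
proof -
  have c: "closure {a j<..<b j} = {a j..b j}" "closure {a k<..<b k} = {a k..b k}"
    using ab assms by auto
  have "eta a b j k = setdist (closure {a j<..<b j}) (closure {a k<..<b k})"
    by (simp add: eta_def)
  also have "\<dots> \<le> dist x w" unfolding c by (rule setdist_le_dist) (use assms in auto)
  finally show ?thesis by (simp add: dist_real_def)
qed

lemma side:
  assumes "j \<in> J" "k \<in> J" "j \<noteq> k"
  shows "(b k \<le> a j \<and> (\<forall>x\<in>{a j..b j}. b k + eta a b j k \<le> x))
       \<or> (\<not> b k \<le> a j \<and> (\<forall>x\<in>{a j..b j}. x + eta a b j k \<le> a k))"
proof -
  have ep: "eta a b j k > 0" by (rule eta_pos[OF assms])
  have abj: "a j < b j" and abk: "a k < b k" using ab assms by auto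
  have "b k < a j \<or> b j < a k"
  proof (rule ccontr)
    assume "\<not> (b k < a j \<or> b j < a k)"
    hence "max (a j) (a k) \<in> {a j..b j}" "max (a j) (a k) \<in> {a k..b k}" using abj abk by auto
    from eta_le_dist[OF assms(1,2) this] ep show False by simp
  qed
  thus ?thesis
  proof
    assume l: "b k < a j"
    have "\<forall>x\<in>{a j..b j}. b k + eta a b j k \<le> x"
    proof
      fix x assume x: "x \<in> {a j..b j}"
      have "eta a b j k \<le> \<bar>x - b k\<bar>" by (rule eta_le_dist[OF assms(1,2) x]) (use abk in auto)
      thus "b k + eta a b j k \<le> x" using x l by auto
    qed
    thus ?thesis using l by auto
  next
    assume r: "b j < a k"
    have "\<forall>x\<in>{a j..b j}. x + eta a b j k \<le> a k"
    proof
      fix x assume x: "x \<in> {a j..b j}"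
      have "eta a b j k \<le> \<bar>x - a k\<bar>" by (rule eta_le_dist[OF assms(1,2) x]) (use abk in auto)
      thus "x + eta a b j k \<le> a k" using x r by auto
    qed
    thus ?thesis using r abj abk by auto
  qed
qed

lemma far:
  assumes "j \<in> J" "x \<in> {a j..b j}"
  shows "\<bar>x - a 0\<bar> \<le> eta a b j 0 + gam a b j + gam a b 0"
proof (rule field_le_epsilon)
  fix e :: real assume e: "e > 0"
  have ne: "{a j<..<b j} \<noteq> {}" "{a 0<..<b 0} \<noteq> {}" using ab assms J0 by auto
  have "setdist {a j<..<b j} {a 0<..<b 0} < eta a b j 0 + e" using e by (simp add: eta_def)
  then obtain x' w where xw: "x' \<in> {a j<..<b j}" "w \<in> {a 0<..<b 0}" "dist x' w < eta a b j 0 + e"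
    using setdist_ltE ne by metis
  have "\<bar>x - a 0\<bar> \<le> \<bar>x - x'\<bar> + \<bar>x' - w\<bar> + \<bar>w - a 0\<bar>" by linarith
  also have "\<dots> \<le> gam a b j + (eta a b j 0 + e) + gam a b 0"
    using xw assms by (auto simp: gam_def dist_real_def)
  finally show "\<bar>x - a 0\<bar> \<le> eta a b j 0 + gam a b j + gam a b 0 + e" by linarith
qed

lemma R0_ge1: "R0 \<ge> 1" unfolding R0_def using gpos[OF J0] by simp

lemma absx:
  assumes "j \<in> J" "x \<in> {a j..b j}"
  shows "\<bar>x\<bar> \<le> R0 * (1 + ee j)"
proof -
  have "\<bar>x\<bar> \<le> \<bar>a 0\<bar> + \<bar>x - a 0\<bar>" by linarith
  also have "\<dots> \<le> \<bar>a 0\<bar> + (ee j + gam a b j + gam a b 0)" using far[OF assms] by (simp add: ee_def)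
  also have "\<dots> \<le> R0 + ee j" using bounds1(5)[OF assms(1)] by (simp add: R0_def)
  also have "\<dots> \<le> R0 * (1 + ee j)"
    using R0_ge1 ee_nonneg[of j] mult_right_mono[of 1 R0 "ee j"] by (simp add: algebra_simps)
  finally show ?thesis .
qed

lemma mu_in: "k \<in> J \<Longrightarrow> mu a b y k \<in> {a k..b k}"
proof -
  assume k: "k \<in> J"
  have s: "0 \<le> (sin (y k))\<^sup>2" "(sin (y k))\<^sup>2 \<le> 1" by (auto simp: abs_square_le_1)
  have g: "gam a b k > 0" using gpos k .
  have "gam a b k * (sin (y k))\<^sup>2 \<le> gam a b k * 1" using s g by (intro mult_left_mono) auto
  moreover have "0 \<le> gam a b k * (sin (y k))\<^sup>2" using s g by simp
  ultimately show ?thesis by (simp add: mu_def gam_def)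
qed

lemma mu_diff: "k \<in> J \<Longrightarrow> \<bar>mu a b y k - mu a b y' k\<bar> \<le> gam a b k * cdist (y k - y' k)"
proof -
  assume k: "k \<in> J"
  have "\<bar>mu a b y k - mu a b y' k\<bar> = gam a b k * \<bar>(sin (y k))\<^sup>2 - (sin (y' k))\<^sup>2\<bar>"
    using gpos[OF k] by (simp add: mu_def abs_mult right_diff_distrib[symmetric])
  also have "\<dots> \<le> gam a b k * cdist (y k - y' k)"
    using gpos[OF k] sin_sq_diff by (intro mult_left_mono) auto
  finally show ?thesis .
qed

lemma yn_bdd: "bdd_above ((\<lambda>j. sqrt (gam a b j) * cdist (y j - y' j)) ` J)"
proof (rule bdd_aboveI2)
  fix j assume j: "j \<in> J"
  have "sqrt (gam a b j) * cdist (y j - y' j) \<le> T1 * (pi/2)"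
    using bounds1(1)[OF j] cdist_le cdist_nonneg T1_nonneg
    by (intro mult_mono) (auto simp: sg_def)
  thus "sqrt (gam a b j) * cdist (y j - y' j) \<le> T1 * (pi/2)" .
qed

lemma yn_upper: "k \<in> J \<Longrightarrow> sg k * cdist (y k - y' k) \<le> ynorm a b J y y'"
  unfolding ynorm_def sg_def by (rule cSUP_upper[OF _ yn_bdd])

lemma yn_nonneg: "ynorm a b J y y' \<ge> 0"
proof -
  have "0 \<le> sg 0 * cdist (y 0 - y' 0)" using sgpos[OF J0] cdist_nonneg by simp
  thus ?thesis using yn_upper[OF J0, of y y'] by linarith
qed

lemma mu_diff2: "k \<in> J \<Longrightarrow> \<bar>mu a b y k - mu a b y' k\<bar> \<le> sg k * ynorm a b J y y'"
proof -
  assume k: "k \<in> J"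
  have "\<bar>mu a b y k - mu a b y' k\<bar> \<le> gam a b k * cdist (y k - y' k)" by (rule mu_diff[OF k])
  also have "\<dots> = sg k * (sg k * cdist (y k - y' k))" using sg_sq[OF k] by (simp add: mult.assoc)
  also have "\<dots> \<le> sg k * ynorm a b J y y'"
    using yn_upper[OF k] sgpos[OF k] by (intro mult_left_mono) auto
  finally show ?thesis .
qed

definition "sm j k = sg j * sg k / eta a b j k"

lemma sm_nonneg: "j \<in> J \<Longrightarrow> k \<in> J \<Longrightarrow> sm j k \<ge> 0"
  using sgpos eta_nonneg by (simp add: sm_def less_imp_le)

lemma S2':
  obtains M2 where "\<And>j. j \<in> J \<Longrightarrow> (sm j) summable_on (J - {j}) \<and>
      CC j * (1 + (ee j)\<^sup>2) * infsum (sm j) (J - {j}) \<le> M2"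
proof -
  obtain M where M: "\<forall>j\<in>J.
           (\<lambda>k. (real_of_ereal (Cc a b J j))^3 * (real_of_ereal (Cc a b J k))\<^sup>2
                 * (1 + (eta a b 0 j)\<^sup>2) * sqrt (gam a b j) * sqrt (gam a b k) / eta a b j k)
             summable_on (J - {j}) \<and>
           (\<Sum>\<^sub>\<infinity>k\<in>J - {j}. (real_of_ereal (Cc a b J j))^3 * (real_of_ereal (Cc a b J k))\<^sup>2
                 * (1 + (eta a b 0 j)\<^sup>2) * sqrt (gam a b j) * sqrt (gam a b k) / eta a b j k) \<le> M"
    using S2 by blast
  have "(sm j) summable_on (J - {j}) \<and> CC j * (1 + (ee j)\<^sup>2) * infsum (sm j) (J - {j}) \<le> M"
    if j: "j \<in> J" for j
  proof -
    define big where "big k = (CC j)^3 * (CC k)\<^sup>2 * (1 + (ee j)\<^sup>2) * sm j k" for k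
    have bigeq: "big k = (real_of_ereal (Cc a b J j))^3 * (real_of_ereal (Cc a b J k))\<^sup>2
                 * (1 + (eta a b 0 j)\<^sup>2) * sqrt (gam a b j) * sqrt (gam a b k) / eta a b j k" for k
      by (simp add: big_def CC_def sm_def sg_def ee_def eta_sym[of 0 j])
    have bs: "big summable_on (J - {j})" and bM: "infsum big (J - {j}) \<le> M"
      using M j unfolding bigeq[abs_def] by auto
    have cj: "CC j \<ge> 1" using CC_ge1[OF j] .
    have le: "CC j * (1 + (ee j)\<^sup>2) * sm j k \<le> big k" if k: "k \<in> J - {j}" for k
    proof -
      have ck: "CC k \<ge> 1" using CC_ge1 k by auto
      have "CC j * 1 \<le> (CC j)^3 * (CC k)\<^sup>2"
      proof (rule mult_mono)
        show "CC j \<le> CC j ^ 3" using cj by (simp add: power3_eq_cube)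
          (metis mult_le_cancel_left1 order_trans[OF _ mult_right_mono[of 1 "CC j" "CC j"]] less_le_trans[OF zero_less_one] one_le_power power2_eq_square)
        show "1 \<le> (CC k)\<^sup>2" using ck by (simp add: one_le_power)
      qed (use cj in auto)
      hence "CC j * ((1 + (ee j)\<^sup>2) * sm j k) \<le> (CC j)^3 * (CC k)\<^sup>2 * ((1 + (ee j)\<^sup>2) * sm j k)"
        using sm_nonneg[of j k] j k by (intro mult_right_mono) auto
      thus ?thesis by (simp add: big_def mult.assoc)
    qed
    have nn: "0 \<le> CC j * (1 + (ee j)\<^sup>2) * sm j k" if k: "k \<in> J - {j}" for k
      using sm_nonneg[of j k] j k cj by auto
    have s1: "(\<lambda>k. CC j * (1 + (ee j)\<^sup>2) * sm j k) summable_on (J - {j})"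
      by (rule summable_on_comparison_test[OF bs le nn])
    have pos: "CC j * (1 + (ee j)\<^sup>2) > 0" using cj by (simp add: add_pos_nonneg)
    have "(\<lambda>k. (1 / (CC j * (1 + (ee j)\<^sup>2))) * (CC j * (1 + (ee j)\<^sup>2) * sm j k)) summable_on (J - {j})"
      by (rule summable_on_cmult_right[OF s1])
    moreover have "(\<lambda>k. (1 / (CC j * (1 + (ee j)\<^sup>2))) * (CC j * (1 + (ee j)\<^sup>2) * sm j k)) = sm j"
    proof
      fix k
      have "(1 / (CC j * (1 + (ee j)\<^sup>2))) * (CC j * (1 + (ee j)\<^sup>2) * sm j k)
         = ((1 / (CC j * (1 + (ee j)\<^sup>2))) * (CC j * (1 + (ee j)\<^sup>2))) * sm j k" by (simp only: mult.assoc)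
      also have "(1 / (CC j * (1 + (ee j)\<^sup>2))) * (CC j * (1 + (ee j)\<^sup>2)) = 1"
        by (rule inv_cancel[OF pos])
      also have "1 * sm j k = sm j k" by simp
      finally show "(1 / (CC j * (1 + (ee j)\<^sup>2))) * (CC j * (1 + (ee j)\<^sup>2) * sm j k) = sm j k" .
    qed
    ultimately have s2: "(sm j) summable_on (J - {j})" by simp
    have "CC j * (1 + (ee j)\<^sup>2) * infsum (sm j) (J - {j}) = infsum (\<lambda>k. CC j * (1 + (ee j)\<^sup>2) * sm j k) (J - {j})"
      by (simp add: infsum_cmult_right')
    also have "\<dots> \<le> infsum big (J - {j})" by (rule infsum_mono[OF s1 bs le])
    finally show ?thesis using s2 bM by simp
  qed
  thus ?thesis using that by blast
qed

lemma S3':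
  obtains M3 where "M3 \<ge> 0" "\<And>j k. j \<in> J \<Longrightarrow> k \<in> J \<Longrightarrow> k \<noteq> j \<Longrightarrow> sm j k \<le> M3"
proof -
  obtain M where M: "\<forall>j\<in>J. \<forall>k\<in>J. k \<noteq> j \<longrightarrow>
           sqrt (gam a b j) * sqrt (gam a b k) \<le> M * (gam a b j powr \<delta> * eta a b j k)"
    using S3 by blast
  have "sm j k \<le> \<bar>M\<bar> * (T1\<^sup>2) powr \<delta>" if jk: "j \<in> J" "k \<in> J" "k \<noteq> j" for j k
  proof -
    have ep: "eta a b j k > 0" using eta_pos jk by auto
    have "sg j * sg k \<le> M * (gam a b j powr \<delta> * eta a b j k)" using M jk by (auto simp: sg_def)
    hence "sm j k \<le> M * gam a b j powr \<delta>" using ep by (simp add: sm_def divide_le_eq mult.assoc)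
    also have "\<dots> \<le> \<bar>M\<bar> * gam a b j powr \<delta>" by (intro mult_right_mono) auto
    also have "\<dots> \<le> \<bar>M\<bar> * (T1\<^sup>2) powr \<delta>"
      using bounds1(5)[OF jk(1)] gpos[OF jk(1)] dpos by (intro mult_left_mono powr_mono2) auto
    finally show ?thesis .
  qed
  thus ?thesis using that[of "\<bar>M\<bar> * (T1\<^sup>2) powr \<delta>"] by auto
qed

end

lemma ext_has_sum:
  fixes f :: "'a \<Rightarrow> real"
  assumes "(f has_sum x) S"
  shows "((\<lambda>k. if k \<in> S then f k else 0) has_sum x) UNIV"
  using has_sum_cong_neutral[of UNIV S "\<lambda>k. if k \<in> S then f k else 0" f x] assms by auto

context gapsys begin

definition "lw y j k = (if k \<in> J - {j} then ln (Pf (a k) (b k) (mu a b y k) (mu a b y j)) / 2 else 0)"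

lemma pf_facts:
  assumes j: "j \<in> J" and k: "k \<in> J - {j}"
  shows "Pf (a k) (b k) (mu a b y k) (mu a b y j) > 0"
    "\<bar>ln (Pf (a k) (b k) (mu a b y k) (mu a b y j))\<bar> \<le> gam a b k / eta a b j k"
    "\<bar>ln (Pf (a k) (b k) (mu a b y k) (mu a b y j)) - ln (Pf (a k) (b k) (mu a b y' k) (mu a b y' j))\<bar>
      \<le> gam a b k / (eta a b j k)\<^sup>2 * \<bar>mu a b y j - mu a b y' j\<bar> + 2 * \<bar>mu a b y k - mu a b y' k\<bar> / eta a b j k"
proof -
  have kJ: "k \<in> J" "j \<noteq> k" using k by auto
  have mk: "mu a b y k \<in> {a k..b k}" "mu a b y' k \<in> {a k..b k}" using mu_in kJ by auto
  have mj: "mu a b y j \<in> {a j..b j}" "mu a b y' j \<in> {a j..b j}" using mu_in j by auto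
  have sd: "(b k + eta a b j k \<le> mu a b y j \<and> b k + eta a b j k \<le> mu a b y' j) \<or>
            (mu a b y j + eta a b j k \<le> a k \<and> mu a b y' j + eta a b j k \<le> a k)"
    using side[OF j kJ(1,2)] mj by blast
  have abk: "a k < b k" using ab kJ by auto
  note T = term_facts[of "a k" "mu a b y k" "b k" "mu a b y' k" "eta a b j k" "mu a b y j" "mu a b y' j"]
  have TT: "Pf (a k) (b k) (mu a b y k) (mu a b y j) > 0 \<and>
    \<bar>ln (Pf (a k) (b k) (mu a b y k) (mu a b y j))\<bar> \<le> (b k - a k)/eta a b j k \<and>
    \<bar>ln (Pf (a k) (b k) (mu a b y k) (mu a b y j)) - ln (Pf (a k) (b k) (mu a b y' k) (mu a b y' j))\<bar>
      \<le> (b k - a k)/(eta a b j k)\<^sup>2 * \<bar>mu a b y j - mu a b y' j\<bar> + 2 * \<bar>mu a b y k - mu a b y' k\<bar>/eta a b j k"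
    by (rule T) (use mk abk eta_pos[OF j kJ(1,2)] sd in auto)
  thus "Pf (a k) (b k) (mu a b y k) (mu a b y j) > 0"
    "\<bar>ln (Pf (a k) (b k) (mu a b y k) (mu a b y j))\<bar> \<le> gam a b k / eta a b j k"
    "\<bar>ln (Pf (a k) (b k) (mu a b y k) (mu a b y j)) - ln (Pf (a k) (b k) (mu a b y' k) (mu a b y' j))\<bar>
      \<le> gam a b k / (eta a b j k)\<^sup>2 * \<bar>mu a b y j - mu a b y' j\<bar> + 2 * \<bar>mu a b y k - mu a b y' k\<bar> / eta a b j k"
    by (auto simp: gam_def)
qed

lemma Bd_has_sum:
  assumes "j \<in> J" "(sm j) summable_on (J - {j})"
  shows "((\<lambda>k. if k \<in> J - {j} then c * sm j k else 0) has_sum (c * infsum (sm j) (J - {j}))) UNIV"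
  by (rule ext_has_sum, rule has_sum_cmult_right, rule has_sum_infsum[OF assms(2)])

lemma lw_bound:
  assumes j: "j \<in> J"
  shows "\<bar>lw y j k\<bar> \<le> (if k \<in> J - {j} then T1 / (2 * sg j) * sm j k else 0)"
proof (cases "k \<in> J - {j}")
  case False
  have "lw y j k = 0" unfolding lw_def by (rule if_not_P[OF False])
  moreover have "(if k \<in> J - {j} then T1 / (2 * sg j) * sm j k else 0) = 0" by (rule if_not_P[OF False])
  ultimately show ?thesis by simp
next
  case True
  have ep: "eta a b j k > 0" using eta_pos j True by auto
  have sj: "sg j > 0" using sgpos j .
  have "\<bar>lw y j k\<bar> = \<bar>ln (Pf (a k) (b k) (mu a b y k) (mu a b y j))\<bar> / 2" using True by (simp add: lw_def)
  also have "\<dots> \<le> (gam a b k / eta a b j k) / 2" using pf_facts(2)[OF j True] by simp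
  also have "\<dots> \<le> (T1 * sg k / eta a b j k) / 2"
    using bounds1(4)[of k] True ep by (intro divide_right_mono) auto
  also have "\<dots> = T1 / (2 * sg j) * sm j k" using sj by (simp add: sm_def field_simps)
  finally show ?thesis using True by simp
qed

lemma Cfac_cont:
  assumes j: "j \<in> J" and k: "k \<in> J - {j}"
  shows "continuous_on {a j..b j} (Cfac a b j k)"
proof -
  have kJ: "k \<in> J" "j \<noteq> k" using k by auto
  have ep: "eta a b j k > 0" using eta_pos j kJ by auto
  from side[OF j kJ] show ?thesis
  proof
    assume l: "b k \<le> a j \<and> (\<forall>x\<in>{a j..b j}. b k + eta a b j k \<le> x)"
    have "Cfac a b j k = (\<lambda>z. (a k - z) / (b k - z))" using l by (auto simp: Cfac_def fun_eq_iff)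
    moreover have "continuous_on {a j..b j} (\<lambda>z. (a k - z) / (b k - z))"
      by (intro continuous_intros) (use l ep in force)
    ultimately show ?thesis by simp
  next
    assume r: "\<not> b k \<le> a j \<and> (\<forall>x\<in>{a j..b j}. x + eta a b j k \<le> a k)"
    have "Cfac a b j k = (\<lambda>z. (b k - z) / (a k - z))" using r by (auto simp: Cfac_def fun_eq_iff)
    moreover have "continuous_on {a j..b j} (\<lambda>z. (b k - z) / (a k - z))"
      by (intro continuous_intros) (use r ep in force)
    ultimately show ?thesis by simp
  qed
qed

lemma Cprod_closed:
  assumes j: "j \<in> J" and z: "z \<in> {a j..b j}" and F: "finite F" "F \<subseteq> J - {j}"
  shows "sqrt (\<Prod>k\<in>F. Cfac a b j k z) \<le> CC j"
proof -
  have cl: "closure {a j<..<b j} = {a j..b j}" using ab j by auto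
  show ?thesis
  proof (rule continuous_le_on_closure[where S = "{a j<..<b j}" and f = "\<lambda>z. sqrt (\<Prod>k\<in>F. Cfac a b j k z)" and x = z])
    have "continuous_on {a j..b j} (\<lambda>z. sqrt (\<Prod>k\<in>F. Cfac a b j k z))"
      using Cfac_cont[OF j] F by (intro continuous_intros) auto
    thus "continuous_on (closure {a j<..<b j}) (\<lambda>z. sqrt (\<Prod>k\<in>F. Cfac a b j k z))"
      using cl by simp
    show "z \<in> closure {a j<..<b j}" using cl z by simp
    show "\<And>x. x \<in> {a j<..<b j} \<Longrightarrow> sqrt (\<Prod>k\<in>F. Cfac a b j k x) \<le> CC j"
      using Cprod_open_real[OF j _ F] by blast
  qed
qed

lemma Pf_le_Cfac:
  assumes j: "j \<in> J" and k: "k \<in> J - {j}"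
  shows "Pf (a k) (b k) (mu a b y k) (mu a b y j) \<le> Cfac a b j k (mu a b y j)"
    "Cfac a b j k (mu a b y j) > 0"
proof -
  have kJ: "k \<in> J" "j \<noteq> k" using k by auto
  have ep: "eta a b j k > 0" using eta_pos j kJ by auto
  have mk: "mu a b y k \<in> {a k..b k}" using mu_in kJ by auto
  have mj: "mu a b y j \<in> {a j..b j}" using mu_in j by auto
  have abk: "a k < b k" using ab kJ by auto
  note TC = term_cfac[of "a k" "mu a b y k" "b k" "eta a b j k" "mu a b y j"]
  have pp: "Pf (a k) (b k) (mu a b y k) (mu a b y j) > 0" using pf_facts(1)[OF j k] .
  from side[OF j kJ] have "Pf (a k) (b k) (mu a b y k) (mu a b y j) \<le> Cfac a b j k (mu a b y j)"
  proof
    assume l: "b k \<le> a j \<and> (\<forall>x\<in>{a j..b j}. b k + eta a b j k \<le> x)"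
    thus ?thesis using TC mk abk ep mj by (auto simp: Cfac_def)
  next
    assume r: "\<not> b k \<le> a j \<and> (\<forall>x\<in>{a j..b j}. x + eta a b j k \<le> a k)"
    thus ?thesis using TC mk abk ep mj by (auto simp: Cfac_def)
  qed
  thus "Pf (a k) (b k) (mu a b y k) (mu a b y j) \<le> Cfac a b j k (mu a b y j)" .
  thus "Cfac a b j k (mu a b y j) > 0" using pp by linarith
qed

end

context gapsys begin

lemma sm_summable: "j \<in> J \<Longrightarrow> (sm j) summable_on (J - {j})"
proof -
  assume j: "j \<in> J"
  obtain M2 where "\<And>j. j \<in> J \<Longrightarrow> (sm j) summable_on (J - {j}) \<and>
      CC j * (1 + (ee j)\<^sup>2) * infsum (sm j) (J - {j}) \<le> M2" using S2' by blast
  thus ?thesis using j by blast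
qed

lemma lw_summable: "j \<in> J \<Longrightarrow> lw y j summable_on UNIV"
proof -
  assume j: "j \<in> J"
  have "((\<lambda>k. if k \<in> J - {j} then T1 / (2 * sg j) * sm j k else 0) has_sum
      (T1 / (2 * sg j) * infsum (sm j) (J - {j}))) UNIV"
    by (rule Bd_has_sum[OF j sm_summable[OF j]])
  hence "(\<lambda>k. if k \<in> J - {j} then T1 / (2 * sg j) * sm j k else 0) summable_on UNIV"
    unfolding summable_on_def by blast
  thus ?thesis by (rule summable_dom) (rule lw_bound[OF j])
qed

lemma W_repr: "j \<in> J \<Longrightarrow> W a b J y j = exp (infsum (lw y j) UNIV)"
proof -
  assume j: "j \<in> J"
  have fe: "(\<lambda>k. if k \<in> J - {j} then sqrt (((a k - mu a b y j) * (b k - mu a b y j)) / (mu a b y k - mu a b y j)\<^sup>2) else 1)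
      = (\<lambda>k. exp (lw y j k))"
  proof
    fix k
    show "(if k \<in> J - {j} then sqrt (((a k - mu a b y j) * (b k - mu a b y j)) / (mu a b y k - mu a b y j)\<^sup>2) else 1)
      = exp (lw y j k)"
    proof (cases "k \<in> J - {j}")
      case True
      have p: "Pf (a k) (b k) (mu a b y k) (mu a b y j) > 0" using pf_facts(1)[OF j True] .
      have "exp (lw y j k) = exp (ln (sqrt (Pf (a k) (b k) (mu a b y k) (mu a b y j))))"
        using True p by (simp add: lw_def ln_sqrt)
      also have "\<dots> = sqrt (Pf (a k) (b k) (mu a b y k) (mu a b y j))" using p by simp
      finally show ?thesis using True by (simp add: Pf_def)
    next
      case False
      have "lw y j k = 0" unfolding lw_def by (rule if_not_P[OF False])
      thus ?thesis using False by simp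
    qed
  qed
  have s: "lw y j summable_on UNIV" by (rule lw_summable[OF j])
  hence hs: "(lw y j has_sum infsum (lw y j) UNIV) UNIV" by (rule has_sum_infsum)
  hence sums: "lw y j sums infsum (lw y j) UNIV" by (rule has_sum_imp_sums)
  hence sm': "summable (lw y j)" by (rule sums_summable)
  have "W a b J y j = prodinf (\<lambda>k. exp (lw y j k))" unfolding W_def fe ..
  also have "\<dots> = exp (suminf (lw y j))" by (rule prodinf_exp[OF sm'])
  also have "suminf (lw y j) = infsum (lw y j) UNIV" using sums by (rule sums_unique[symmetric])
  finally show ?thesis .
qed

lemma lw_upper: "j \<in> J \<Longrightarrow> infsum (lw y j) UNIV \<le> ln (CC j)"
proof -
  assume j: "j \<in> J"
  show ?thesis
  proof (rule infsum_le_finite_sums[OF lw_summable[OF j]])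
    fix F :: "nat set" assume F: "finite F" "F \<subseteq> UNIV"
    define F' where "F' = F \<inter> (J - {j})"
    have F': "finite F'" "F' \<subseteq> J - {j}" using F by (auto simp: F'_def)
    define z where "z = mu a b y j"
    have z: "z \<in> {a j..b j}" using mu_in j by (simp add: z_def)
    have cpos: "\<And>k. k \<in> F' \<Longrightarrow> Cfac a b j k z > 0"
      using F' Pf_le_Cfac(2)[OF j, of _ y] unfolding z_def by blast
    have pp: "0 < (\<Prod>k\<in>F'. Cfac a b j k z)" using cpos by (rule prod_pos) (simp add: less_imp_le)
    have "sum (lw y j) F = (\<Sum>k\<in>F'. ln (Pf (a k) (b k) (mu a b y k) z) / 2)"
      unfolding F'_def z_def lw_def by (rule sum.inter_restrict[OF F(1), symmetric])
    also have "\<dots> \<le> (\<Sum>k\<in>F'. ln (Cfac a b j k z) / 2)"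
    proof (rule sum_mono)
      fix k assume k: "k \<in> F'"
      hence kk: "k \<in> J - {j}" using F' by auto
      have "ln (Pf (a k) (b k) (mu a b y k) z) \<le> ln (Cfac a b j k z)"
        using Pf_le_Cfac[OF j kk, of y] pf_facts(1)[OF j kk, of y] by (simp add: z_def)
      thus "ln (Pf (a k) (b k) (mu a b y k) z) / 2 \<le> ln (Cfac a b j k z) / 2" by simp
    qed
    also have "\<dots> = (\<Sum>k\<in>F'. ln (Cfac a b j k z)) / 2"
      by (simp add: sum_divide_distrib)
    also have "(\<Sum>k\<in>F'. ln (Cfac a b j k z)) = ln (\<Prod>k\<in>F'. Cfac a b j k z)"
      by (rule ln_prod[symmetric]) (use F' cpos in force)+
    also have "ln (\<Prod>k\<in>F'. Cfac a b j k z) / 2 = ln (sqrt (\<Prod>k\<in>F'. Cfac a b j k z))"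
      by (rule ln_sqrt[symmetric]) (use pp in simp)
    also have "\<dots> \<le> ln (CC j)"
    proof -
      have pos: "0 < sqrt (\<Prod>k\<in>F'. Cfac a b j k z)" using pp by simp
      have le: "sqrt (\<Prod>k\<in>F'. Cfac a b j k z) \<le> CC j" by (rule Cprod_closed[OF j z F'])
      have cj: "0 < CC j" using CC_ge1[OF j] by simp
      show ?thesis using ln_le_cancel_iff[OF pos cj] le by blast
    qed
    finally show "sum (lw y j) F \<le> ln (CC j)" .
  qed
qed

lemma W_le: "j \<in> J \<Longrightarrow> W a b J y j \<le> CC j"
proof -
  assume j: "j \<in> J"
  have "W a b J y j = exp (infsum (lw y j) UNIV)" by (rule W_repr[OF j])
  also have "\<dots> \<le> exp (ln (CC j))" using lw_upper[OF j] by simp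
  also have "\<dots> = CC j" using CC_ge1[OF j] by simp
  finally show ?thesis .
qed

lemma W_pos: "j \<in> J \<Longrightarrow> W a b J y j > 0"
  using W_repr by simp

end

context gapsys begin

lemma lw_term_diff:
  assumes j: "j \<in> J" and M3: "M3 \<ge> 0" "\<forall>k\<in>J. k \<noteq> j \<longrightarrow> sm j k \<le> M3"
  shows "\<bar>lw y j k - lw y' j k\<bar> \<le> (if k \<in> J - {j} then
           (ynorm a b J y y' / sg j * (M3/2 + 1)) * sm j k else 0)"
proof (cases "k \<in> J - {j}")
  case False
  have "lw y j k = 0" unfolding lw_def by (rule if_not_P[OF False])
  moreover have "lw y' j k = 0" unfolding lw_def by (rule if_not_P[OF False])
  moreover have "(if k \<in> J - {j} then (ynorm a b J y y' / sg j * (M3/2 + 1)) * sm j k else 0) = 0"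
    by (rule if_not_P[OF False])
  ultimately show ?thesis by simp
next
  case True
  define N where "N = ynorm a b J y y'"
  define t where "t = N / sg j"
  define \<eta> where "\<eta> = eta a b j k"
  have kJ: "k \<in> J" "k \<noteq> j" using True by auto
  have ep: "\<eta> > 0" using eta_pos[OF j kJ(1)] kJ by (simp add: \<eta>_def)
  have sj: "sg j > 0" and sk: "sg k > 0" using sgpos j kJ by auto
  have N0: "N \<ge> 0" using yn_nonneg by (simp add: N_def)
  have t0: "t \<ge> 0" using N0 sj by (simp add: t_def)
  have gk: "gam a b k = sg k * sg k" using sg_sq[OF kJ(1)] by simp
  have smd: "sm j k = sg j * sg k / \<eta>" by (simp add: sm_def \<eta>_def)
  have sm0: "sm j k \<ge> 0" using sm_nonneg[OF j kJ(1)] .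
  have smM: "sm j k \<le> M3" using M3 kJ by auto
  define dz where "dz = \<bar>mu a b y j - mu a b y' j\<bar>"
  define dm where "dm = \<bar>mu a b y k - mu a b y' k\<bar>"
  have dz: "dz \<le> sg j * N" using mu_diff2[OF j] by (simp add: dz_def N_def)
  have dm: "dm \<le> sg k * N" using mu_diff2[OF kJ(1)] by (simp add: dm_def N_def)
  have pf: "\<bar>ln (Pf (a k) (b k) (mu a b y k) (mu a b y j)) - ln (Pf (a k) (b k) (mu a b y' k) (mu a b y' j))\<bar>
      \<le> gam a b k / \<eta>\<^sup>2 * dz + 2 * dm / \<eta>"
    using pf_facts(3)[OF j True, of y y'] by (simp add: dz_def dm_def \<eta>_def)
  have X: "gam a b k / \<eta>\<^sup>2 * dz \<le> sm j k * sm j k * t"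
  proof -
    have "gam a b k / \<eta>\<^sup>2 * dz \<le> gam a b k / \<eta>\<^sup>2 * (sg j * N)"
      using dz gpos[OF kJ(1)] by (intro mult_left_mono) auto
    also have "\<dots> = sm j k * sm j k * t" unfolding smd t_def gk
      using sj ep by (simp add: field_simps power2_eq_square)
    finally show ?thesis .
  qed
  have Y: "2 * dm / \<eta> \<le> 2 * sm j k * t"
  proof -
    have "2 * dm / \<eta> \<le> 2 * (sg k * N) / \<eta>" using dm ep by (intro divide_right_mono) auto
    also have "\<dots> = 2 * sm j k * t" unfolding smd t_def using sj ep by (simp add: field_simps)
    finally show ?thesis .
  qed
  have Z: "sm j k * sm j k * t \<le> M3 * sm j k * t"
    using smM sm0 t0 by (intro mult_right_mono) auto
  have "\<bar>lw y j k - lw y' j k\<bar> = \<bar>ln (Pf (a k) (b k) (mu a b y k) (mu a b y j)) - ln (Pf (a k) (b k) (mu a b y' k) (mu a b y' j))\<bar> / 2"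
    using True by (simp add: lw_def diff_divide_distrib[symmetric])
  also have "\<dots> \<le> (M3 * sm j k * t + 2 * sm j k * t) / 2"
  proof (rule divide_right_mono)
    show "\<bar>ln (Pf (a k) (b k) (mu a b y k) (mu a b y j)) - ln (Pf (a k) (b k) (mu a b y' k) (mu a b y' j))\<bar>
      \<le> M3 * sm j k * t + 2 * sm j k * t" using pf X Y Z by linarith
  qed simp
  also have "\<dots> = (t * (M3/2 + 1)) * sm j k" by (simp add: field_simps)
  finally show ?thesis using True by (simp add: t_def N_def)
qed

lemma lw_diff:
  assumes j: "j \<in> J" and M3: "M3 \<ge> 0" "\<forall>k\<in>J. k \<noteq> j \<longrightarrow> sm j k \<le> M3"
  shows "sg j * \<bar>infsum (lw y j) UNIV - infsum (lw y' j) UNIV\<bar>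
           \<le> (M3/2 + 1) * ynorm a b J y y' * infsum (sm j) (J - {j})"
proof -
  define c where "c = ynorm a b J y y' / sg j * (M3/2 + 1)"
  have hs: "((\<lambda>k. if k \<in> J - {j} then c * sm j k else 0) has_sum (c * infsum (sm j) (J - {j}))) UNIV"
    by (rule Bd_has_sum[OF j sm_summable[OF j]])
  hence su: "(\<lambda>k. if k \<in> J - {j} then c * sm j k else 0) summable_on UNIV"
    unfolding summable_on_def by blast
  have "\<bar>infsum (lw y j) UNIV - infsum (lw y' j) UNIV\<bar>
      \<le> infsum (\<lambda>k. if k \<in> J - {j} then c * sm j k else 0) UNIV"
    by (rule infsum_diff_dom[OF lw_summable[OF j] lw_summable[OF j] su])
       (unfold c_def, rule lw_term_diff[OF j M3])
  also have "\<dots> = c * infsum (sm j) (J - {j})" using hs by (rule infsumI)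
  finally have 1: "\<bar>infsum (lw y j) UNIV - infsum (lw y' j) UNIV\<bar> \<le> c * infsum (sm j) (J - {j})" .
  have sj: "sg j > 0" using sgpos j .
  have "sg j * \<bar>infsum (lw y j) UNIV - infsum (lw y' j) UNIV\<bar> \<le> sg j * (c * infsum (sm j) (J - {j}))"
    using 1 sj by (intro mult_left_mono) auto
  also have "\<dots> = (M3/2 + 1) * ynorm a b J y y' * infsum (sm j) (J - {j})"
    unfolding c_def using sj by (simp add: field_simps)
  finally show ?thesis .
qed

lemma W_diff:
  assumes j: "j \<in> J" and M3: "M3 \<ge> 0" "\<forall>k\<in>J. k \<noteq> j \<longrightarrow> sm j k \<le> M3"
  shows "sg j * \<bar>W a b J y j - W a b J y' j\<bar>
           \<le> CC j * ((M3/2 + 1) * ynorm a b J y y' * infsum (sm j) (J - {j}))"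
proof -
  have e: "\<bar>W a b J y j - W a b J y' j\<bar> \<le> CC j * \<bar>infsum (lw y j) UNIV - infsum (lw y' j) UNIV\<bar>"
    unfolding W_repr[OF j, of y] W_repr[OF j, of y']
    by (rule exp_diff_le) (use W_le[OF j] W_repr[OF j] in metis)+
  have "sg j * \<bar>W a b J y j - W a b J y' j\<bar> \<le> sg j * (CC j * \<bar>infsum (lw y j) UNIV - infsum (lw y' j) UNIV\<bar>)"
    using e sgpos[OF j] by (intro mult_left_mono) auto
  also have "\<dots> = CC j * (sg j * \<bar>infsum (lw y j) UNIV - infsum (lw y' j) UNIV\<bar>)" by simp
  also have "\<dots> \<le> CC j * ((M3/2 + 1) * ynorm a b J y y' * infsum (sm j) (J - {j}))"
    using lw_diff[OF j M3, of y y'] CC_ge1[OF j] by (intro mult_left_mono) auto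
  finally show ?thesis .
qed

end

lemma abs_mult_le2: "\<bar>x\<bar> \<le> X \<Longrightarrow> \<bar>y\<bar> \<le> Y \<Longrightarrow> \<bar>x * y\<bar> \<le> X * (Y::real)"
  by (simp add: abs_mult mult_mono')

context gapsys begin

lemma sum_sg_cmult: "(\<lambda>k. c * sg k) summable_on J" "infsum (\<lambda>k. c * sg k) J = c * infsum sg J"
  using sg_summable by (auto intro: summable_on_cmult_right simp: infsum_cmult_right')

lemma sum_esg_cmult: "(\<lambda>k. c * ((1 + ee k) * sg k)) summable_on J"
    "infsum (\<lambda>k. c * ((1 + ee k) * sg k)) J = c * infsum (\<lambda>k. (1 + ee k) * sg k) J"
  using esg_summable by (auto intro: summable_on_cmult_right simp: infsum_cmult_right')

lemma q1t: "k \<in> J \<Longrightarrow> \<bar>a k + b k - 2 * mu a b y k\<bar> \<le> T1 * sg k"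
proof -
  assume k: "k \<in> J"
  have "mu a b y k \<in> {a k..b k}" by (rule mu_in[OF k])
  hence "\<bar>a k + b k - 2 * mu a b y k\<bar> \<le> gam a b k" by (auto simp: gam_def)
  thus ?thesis using bounds1(4)[OF k] by linarith
qed

lemma Q1_summable: "(\<lambda>k. a k + b k - 2 * mu a b y k) summable_on J"
  by (rule summable_dom[OF sum_sg_cmult(1)]) (rule q1t)

lemma Q1_bound: "\<bar>Q1 a b J y\<bar> \<le> T1 * T1"
proof -
  have "\<bar>Q1 a b J y\<bar> \<le> infsum (\<lambda>k. T1 * sg k) J"
    unfolding Q1_def by (rule infsum_abs_dom[OF sum_sg_cmult(1)]) (rule q1t)
  also have "\<dots> = T1 * infsum sg J" by (rule sum_sg_cmult(2))
  also have "\<dots> \<le> T1 * T1" using sg_sum T1_nonneg by (intro mult_left_mono) auto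
  finally show ?thesis .
qed

lemma Q1_diff: "\<bar>Q1 a b J y - Q1 a b J y'\<bar> \<le> 2 * T1 * ynorm a b J y y'"
proof -
  define N where "N = ynorm a b J y y'"
  have "\<bar>Q1 a b J y - Q1 a b J y'\<bar> \<le> infsum (\<lambda>k. (2 * N) * sg k) J"
    unfolding Q1_def
  proof (rule infsum_diff_dom[OF Q1_summable Q1_summable sum_sg_cmult(1)])
    fix k assume k: "k \<in> J"
    have e: "(a k + b k - 2 * mu a b y k) - (a k + b k - 2 * mu a b y' k) = 2 * (mu a b y' k - mu a b y k)"
      by simp
    have "\<bar>(a k + b k - 2 * mu a b y k) - (a k + b k - 2 * mu a b y' k)\<bar> = 2 * \<bar>mu a b y k - mu a b y' k\<bar>"
      unfolding e abs_mult by (simp add: abs_minus_commute)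
    also have "\<dots> \<le> 2 * (sg k * N)" using mu_diff2[OF k] by (simp add: N_def)
    finally show "\<bar>(a k + b k - 2 * mu a b y k) - (a k + b k - 2 * mu a b y' k)\<bar> \<le> 2 * N * sg k"
      by (simp add: mult_ac)
  qed
  also have "\<dots> = 2 * N * infsum sg J" by (rule sum_sg_cmult(2))
  also have "\<dots> \<le> 2 * N * T1" using sg_sum yn_nonneg by (intro mult_left_mono) (auto simp: N_def)
  finally show ?thesis by (simp add: N_def mult_ac)
qed

lemma q2t: "k \<in> J \<Longrightarrow> \<bar>(a k)\<^sup>2 + (b k)\<^sup>2 - 2 * (mu a b y k)\<^sup>2\<bar> \<le> (4 * R0 * T1) * ((1 + ee k) * sg k)"
proof -
  assume k: "k \<in> J"
  define m where "m = mu a b y k"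
  have m: "m \<in> {a k..b k}" using mu_in[OF k] by (simp add: m_def)
  have abk: "a k < b k" using ab k by auto
  have am: "\<bar>a k\<bar> \<le> R0 * (1 + ee k)" "\<bar>b k\<bar> \<le> R0 * (1 + ee k)" "\<bar>m\<bar> \<le> R0 * (1 + ee k)"
    using absx[OF k] m abk by auto
  have d: "\<bar>a k - m\<bar> \<le> gam a b k" "\<bar>b k - m\<bar> \<le> gam a b k" using m by (auto simp: gam_def)
  have s: "\<bar>a k + m\<bar> \<le> 2 * (R0 * (1 + ee k))" "\<bar>b k + m\<bar> \<le> 2 * (R0 * (1 + ee k))" using am by linarith+
  have "(a k)\<^sup>2 + (b k)\<^sup>2 - 2 * m\<^sup>2 = (a k - m) * (a k + m) + (b k - m) * (b k + m)"
    by (simp add: power2_eq_square algebra_simps)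
  hence "\<bar>(a k)\<^sup>2 + (b k)\<^sup>2 - 2 * m\<^sup>2\<bar> \<le> \<bar>(a k - m) * (a k + m)\<bar> + \<bar>(b k - m) * (b k + m)\<bar>" by simp
  also have "\<dots> \<le> gam a b k * (2 * (R0 * (1 + ee k))) + gam a b k * (2 * (R0 * (1 + ee k)))"
    using abs_mult_le2[OF d(1) s(1)] abs_mult_le2[OF d(2) s(2)] by linarith
  also have "\<dots> = (4 * R0 * (1 + ee k)) * gam a b k" by (simp add: algebra_simps)
  also have "\<dots> \<le> (4 * R0 * (1 + ee k)) * (T1 * sg k)"
    using bounds1(4)[OF k] R0_ge1 ee_nonneg[of k] by (intro mult_left_mono) auto
  also have "\<dots> = (4 * R0 * T1) * ((1 + ee k) * sg k)" by (simp add: mult_ac)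
  finally show ?thesis by (simp add: m_def)
qed

lemma Q2_summable: "(\<lambda>k. (a k)\<^sup>2 + (b k)\<^sup>2 - 2 * (mu a b y k)\<^sup>2) summable_on J"
  by (rule summable_dom[OF sum_esg_cmult(1)]) (rule q2t)

lemma Q2_bound: "\<bar>Q2 a b J y\<bar> \<le> 4 * R0 * T1 * T1"
proof -
  have "\<bar>Q2 a b J y\<bar> \<le> infsum (\<lambda>k. (4 * R0 * T1) * ((1 + ee k) * sg k)) J"
    unfolding Q2_def by (rule infsum_abs_dom[OF sum_esg_cmult(1)]) (rule q2t)
  also have "\<dots> = (4 * R0 * T1) * infsum (\<lambda>k. (1 + ee k) * sg k) J" by (rule sum_esg_cmult(2))
  also have "\<dots> \<le> (4 * R0 * T1) * T1" using esg_sum T1_nonneg R0_ge1 by (intro mult_left_mono) auto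
  finally show ?thesis .
qed

lemma Q2_diff: "\<bar>Q2 a b J y - Q2 a b J y'\<bar> \<le> 4 * R0 * T1 * ynorm a b J y y'"
proof -
  define N where "N = ynorm a b J y y'"
  have N0: "N \<ge> 0" using yn_nonneg by (simp add: N_def)
  have "\<bar>Q2 a b J y - Q2 a b J y'\<bar> \<le> infsum (\<lambda>k. (4 * R0 * N) * ((1 + ee k) * sg k)) J"
    unfolding Q2_def
  proof (rule infsum_diff_dom[OF Q2_summable Q2_summable sum_esg_cmult(1)])
    fix k assume k: "k \<in> J"
    define m where "m = mu a b y k"
    define m' where "m' = mu a b y' k"
    have abk: "a k < b k" using ab k by auto
    have mm: "\<bar>m\<bar> \<le> R0 * (1 + ee k)" "\<bar>m'\<bar> \<le> R0 * (1 + ee k)"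
      using absx[OF k] mu_in[OF k] by (auto simp: m_def m'_def)
    have s: "\<bar>m + m'\<bar> \<le> 2 * (R0 * (1 + ee k))" using mm by linarith
    have d: "\<bar>m - m'\<bar> \<le> sg k * N" using mu_diff2[OF k] by (simp add: m_def m'_def N_def)
    have "\<bar>((a k)\<^sup>2 + (b k)\<^sup>2 - 2 * m\<^sup>2) - ((a k)\<^sup>2 + (b k)\<^sup>2 - 2 * m'\<^sup>2)\<bar> = 2 * \<bar>(m - m') * (m + m')\<bar>"
    proof -
      have e: "((a k)\<^sup>2 + (b k)\<^sup>2 - 2 * m\<^sup>2) - ((a k)\<^sup>2 + (b k)\<^sup>2 - 2 * m'\<^sup>2) = (-2) * ((m - m') * (m + m'))"
        by (simp add: power2_eq_square algebra_simps)
      show ?thesis unfolding e abs_mult by simp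
    qed
    also have "\<dots> \<le> 2 * ((sg k * N) * (2 * (R0 * (1 + ee k))))" using abs_mult_le2[OF d s] by linarith
    also have "\<dots> = (4 * R0 * N) * ((1 + ee k) * sg k)" by (simp add: mult_ac)
    finally show "\<bar>((a k)\<^sup>2 + (b k)\<^sup>2 - 2 * (mu a b y k)\<^sup>2) - ((a k)\<^sup>2 + (b k)\<^sup>2 - 2 * (mu a b y' k)\<^sup>2)\<bar>
        \<le> (4 * R0 * N) * ((1 + ee k) * sg k)" by (simp add: m_def m'_def)
  qed
  also have "\<dots> = (4 * R0 * N) * infsum (\<lambda>k. (1 + ee k) * sg k) J" by (rule sum_esg_cmult(2))
  also have "\<dots> \<le> (4 * R0 * N) * T1" using esg_sum N0 R0_ge1 by (intro mult_left_mono) auto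
  finally show ?thesis by (simp add: N_def mult_ac)
qed

end

lemma prod_lip:
  fixes s W W' C F F' \<alpha> \<beta> D :: real
  assumes "0 \<le> s" "0 \<le> W" "W \<le> C" "\<bar>F - F'\<bar> \<le> \<beta>" "\<bar>F'\<bar> \<le> \<alpha>" "s * \<bar>W - W'\<bar> \<le> D"
  shows "s * \<bar>F * W - F' * W'\<bar> \<le> s * \<beta> * C + \<alpha> * D"
proof -
  have e: "F * W - F' * W' = (F - F') * W + F' * (W - W')" by (simp add: algebra_simps)
  have 1: "\<bar>(F - F') * W\<bar> \<le> \<beta> * C" by (rule abs_mult_le2) (use assms in auto)
  have 2: "s * \<bar>F' * (W - W')\<bar> = \<bar>F'\<bar> * (s * \<bar>W - W'\<bar>)" by (simp add: abs_mult)
  have 3: "\<bar>F'\<bar> * (s * \<bar>W - W'\<bar>) \<le> \<alpha> * D"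
    by (rule mult_mono) (use assms in auto)
  have "s * \<bar>F * W - F' * W'\<bar> \<le> s * (\<bar>(F - F') * W\<bar> + \<bar>F' * (W - W')\<bar>)"
    unfolding e using assms(1) by (intro mult_left_mono abs_triangle_ineq) 
  also have "\<dots> = s * \<bar>(F - F') * W\<bar> + s * \<bar>F' * (W - W')\<bar>" by (simp add: algebra_simps)
  also have "\<dots> \<le> s * (\<beta> * C) + \<alpha> * D" using 1 2 3 assms(1) mult_left_mono[OF 1 assms(1)] by linarith
  finally show ?thesis by (simp add: mult.assoc)
qed

lemma aux_lin: "2 * u \<le> 1 + X \<Longrightarrow> 0 \<le> X \<Longrightarrow> 1 + u \<le> 2 * (1 + (X::real))" by simp

lemma one_e_le: "(e::real) \<ge> 0 \<Longrightarrow> 1 + e \<le> 2 * (1 + e\<^sup>2)"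
proof -
  assume e: "e \<ge> 0"
  have "0 \<le> (e - 1)\<^sup>2" by simp
  hence h1: "2 * e \<le> 1 + e * e" by (simp add: power2_eq_square algebra_simps)
  have h2: "0 \<le> e * e" by simp
  show ?thesis unfolding power2_eq_square by (rule aux_lin[OF h1 h2])
qed

lemma one_e_sq_le: "(e::real) \<ge> 0 \<Longrightarrow> (1 + e)\<^sup>2 \<le> 2 * (1 + e\<^sup>2)"
proof -
  have "0 \<le> (e - 1)\<^sup>2" by simp
  thus ?thesis by (simp add: power2_eq_square algebra_simps)
qed

context gapsys begin

lemma Psi_lip:
  assumes j: "j \<in> J" and M3: "M3 \<ge> 0" "\<forall>k\<in>J. k \<noteq> j \<longrightarrow> sm j k \<le> M3"
    and M2: "CC j * (1 + (ee j)\<^sup>2) * infsum (sm j) (J - {j}) \<le> M2"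
  shows "sg j * \<bar>Psi a b J y j - Psi a b J y' j\<bar>
     \<le> (2 * T1 * T1 + (M3/2 + 1) * (T1 * T1 + 2 * R0) * M2) * ynorm a b J y y'"
proof -
  define N where "N = ynorm a b J y y'"
  define S where "S = infsum (sm j) (J - {j})"
  define E where "E = 1 + ee j"
  define K3 where "K3 = M3/2 + 1"
  have N0: "N \<ge> 0" using yn_nonneg by (simp add: N_def)
  have S0: "S \<ge> 0" unfolding S_def by (rule infsum_nonneg) (use sm_nonneg j in auto)
  have E1: "E \<ge> 1" using ee_nonneg[of j] by (simp add: E_def)
  have K30: "K3 \<ge> 0" using M3 by (simp add: K3_def)
  have sj: "sg j > 0" using sgpos[OF j] .
  have cj: "CC j \<ge> 1" using CC_ge1[OF j] .
  have T0: "T1 \<ge> 0" by (rule T1_nonneg)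
  have R1: "R0 \<ge> 1" by (rule R0_ge1)
  have z: "\<bar>mu a b y' j\<bar> \<le> R0 * E" using absx[OF j mu_in[OF j]] by (simp add: E_def)
  have dz: "\<bar>mu a b y j - mu a b y' j\<bar> \<le> T1 * N"
    using mu_diff2[OF j, of y y'] bounds1(1)[OF j] N0 mult_right_mono[of "sg j" T1 N]
    by (simp add: N_def)
  have dq: "\<bar>Q1 a b J y - Q1 a b J y'\<bar> \<le> 2 * T1 * N" using Q1_diff by (simp add: N_def)
  have beta: "\<bar>(Q1 a b J y / 2 + mu a b y j) - (Q1 a b J y' / 2 + mu a b y' j)\<bar> \<le> 2 * T1 * N"
    using dq dz by (simp add: abs_le_iff)
  have alpha: "\<bar>Q1 a b J y' / 2 + mu a b y' j\<bar> \<le> (T1 * T1 / 2 + R0) * E"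
  proof -
    have "\<bar>Q1 a b J y' / 2 + mu a b y' j\<bar> \<le> T1 * T1 / 2 + R0 * E" using Q1_bound[of y'] z by linarith
    also have "T1 * T1 / 2 \<le> T1 * T1 / 2 * E" using E1 T0 by (simp add: mult_le_cancel_left1)
    finally show ?thesis by (simp add: algebra_simps)
  qed
  have D: "sg j * \<bar>W a b J y j - W a b J y' j\<bar> \<le> CC j * (K3 * N * S)"
    using W_diff[OF j M3, of y y'] by (simp add: K3_def N_def S_def)
  have main: "sg j * \<bar>Psi a b J y j - Psi a b J y' j\<bar>
      \<le> sg j * (2 * T1 * N) * CC j + ((T1 * T1 / 2 + R0) * E) * (CC j * (K3 * N * S))"
    unfolding Psi_def
    by (rule prod_lip[OF _ _ W_le[OF j] beta alpha D]) (use sj W_pos[OF j, of y] in auto)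
  have p1: "sg j * (2 * T1 * N) * CC j \<le> 2 * T1 * T1 * N"
  proof -
    have "sg j * (2 * T1 * N) * CC j = (CC j * sg j) * (2 * T1 * N)" by (simp add: mult_ac)
    also have "\<dots> \<le> T1 * (2 * T1 * N)" using bounds1(2)[OF j] T0 N0 by (intro mult_right_mono) auto
    finally show ?thesis by (simp add: mult_ac)
  qed
  have p2: "((T1 * T1 / 2 + R0) * E) * (CC j * (K3 * N * S)) \<le> K3 * (T1 * T1 + 2 * R0) * M2 * N"
  proof -
    have "((T1 * T1 / 2 + R0) * E) * (CC j * (K3 * N * S)) = ((T1 * T1 / 2 + R0) * K3 * N) * (E * (CC j * S))"
      by (simp add: mult_ac)
    also have "E * (CC j * S) \<le> 2 * (1 + (ee j)\<^sup>2) * (CC j * S)"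
      using one_e_le[OF ee_nonneg[of j]] cj S0 by (intro mult_right_mono) (auto simp: E_def)
    also have "2 * (1 + (ee j)\<^sup>2) * (CC j * S) \<le> 2 * M2"
    proof -
      have "2 * (1 + (ee j)\<^sup>2) * (CC j * S) = 2 * (CC j * (1 + (ee j)\<^sup>2) * S)" by (simp only: mult_ac)
      thus ?thesis using M2 unfolding S_def by linarith
    qed
    finally have "((T1 * T1 / 2 + R0) * E) * (CC j * (K3 * N * S)) \<le> ((T1 * T1 / 2 + R0) * K3 * N) * (2 * M2)"
      using T0 R1 K30 N0 by (simp add: mult_left_mono)
    thus ?thesis by (simp add: algebra_simps)
  qed
  have fin: "sg j * \<bar>Psi a b J y j - Psi a b J y' j\<bar> \<le> 2 * T1 * T1 * N + K3 * (T1 * T1 + 2 * R0) * M2 * N"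
    using main p1 p2 by linarith
  have eq: "2 * T1 * T1 * N + K3 * (T1 * T1 + 2 * R0) * M2 * N
      = (2 * T1 * T1 + (M3/2 + 1) * (T1 * T1 + 2 * R0) * M2) * N" by (simp add: K3_def algebra_simps)
  have "sg j * \<bar>Psi a b J y j - Psi a b J y' j\<bar> \<le> (2 * T1 * T1 + (M3/2 + 1) * (T1 * T1 + 2 * R0) * M2) * N"
    using fin eq by linarith
  thus ?thesis unfolding N_def .
qed

end

lemma lin5: fixes a1 a2 a3 a4 a5 b1 b2 b3 b4 b5 :: real
  shows "a1 \<le> b1 \<Longrightarrow> a2 \<le> b2 \<Longrightarrow> a3 \<le> b3 \<Longrightarrow> a4 \<le> b4 \<Longrightarrow> a5 \<le> b5 \<Longrightarrow>
    a1/4 + a2/8 + (a3 + a4)/2 + a5 \<le> b1/4 + b2/8 + (b3 + b4)/2 + b5" by argo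

lemma abs4: fixes A B C D :: real shows "\<bar>A + B - C + D\<bar> \<le> \<bar>A\<bar> + \<bar>B\<bar> + \<bar>C\<bar> + \<bar>D\<bar>"
proof -
  have "\<bar>A + B - C + D\<bar> \<le> \<bar>A + B - C\<bar> + \<bar>D\<bar>" by (rule abs_triangle_ineq)
  also have "\<bar>A + B - C\<bar> \<le> \<bar>A + B\<bar> + \<bar>C\<bar>" by (rule abs_triangle_ineq4)
  also have "\<bar>A + B\<bar> \<le> \<bar>A\<bar> + \<bar>B\<bar>" by (rule abs_triangle_ineq)
  finally show ?thesis by simp
qed

lemma xi_alpha:
  fixes q p z T R E :: real
  assumes q: "\<bar>q\<bar> \<le> T*T" and p: "\<bar>p\<bar> \<le> 4*R*T*T" and z: "\<bar>z\<bar> \<le> R*E"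
    and E: "E \<ge> 1" and R: "R \<ge> 0" and T: "T \<ge> 0"
  shows "\<bar>p/4 + q\<^sup>2/8 - z*q/2 + z\<^sup>2\<bar> \<le> (R*T*T + T*T*T*T/8 + R*T*T/2 + R*R) * (E*E)"
proof -
  have qq: "\<bar>q*q\<bar> \<le> (T*T)*(T*T)" by (rule abs_mult_le2[OF q q])
  have zq: "\<bar>z*q\<bar> \<le> (R*E)*(T*T)" by (rule abs_mult_le2[OF z q])
  have zz: "\<bar>z*z\<bar> \<le> (R*E)*(R*E)" by (rule abs_mult_le2[OF z z])
  have "\<bar>p/4 + q\<^sup>2/8 - z*q/2 + z\<^sup>2\<bar> \<le> \<bar>p/4\<bar> + \<bar>q\<^sup>2/8\<bar> + \<bar>z*q/2\<bar> + \<bar>z\<^sup>2\<bar>" by (rule abs4)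
  also have "\<dots> = \<bar>p\<bar>/4 + \<bar>q*q\<bar>/8 + \<bar>z*q\<bar>/2 + \<bar>z*z\<bar>" by (simp add: power2_eq_square)
  also have "\<dots> \<le> 4*R*T*T/4 + (T*T)*(T*T)/8 + (R*E)*(T*T)/2 + (R*E)*(R*E)"
    using p qq zq zz by linarith
  also have "\<dots> \<le> (R*T*T + T*T*T*T/8 + R*T*T/2 + R*R) * (E*E)"
  proof -
    have EE1: "1 \<le> E*E" using mult_mono[of 1 E 1 E] E by simp
    have EE2: "E \<le> E*E" using mult_left_mono[of 1 E E] E by simp
    have RTT: "0 \<le> R*T*T" using R T by simp
    have T4: "0 \<le> T*T*T*T/8" using T by simp
    have c1: "R*T*T \<le> R*T*T*(E*E)" using mult_left_mono[OF EE1 RTT] by simp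
    have c2: "T*T*T*T/8 \<le> T*T*T*T/8*(E*E)" using mult_left_mono[OF EE1 T4] by simp
    have c3: "R*T*T*E \<le> R*T*T*(E*E)" using mult_left_mono[OF EE2 RTT] .
    have e: "4*R*T*T/4 + (T*T)*(T*T)/8 + (R*E)*(T*T)/2 + (R*E)*(R*E)
        = R*T*T + T*T*T*T/8 + (R*T*T*E)/2 + R*R*(E*E)" by (simp add: algebra_simps)
    have e2: "(R*T*T + T*T*T*T/8 + R*T*T/2 + R*R) * (E*E)
        = R*T*T*(E*E) + T*T*T*T/8*(E*E) + R*T*T*(E*E)/2 + R*R*(E*E)" by (simp add: algebra_simps)
    show ?thesis unfolding e e2 using c1 c2 c3 by linarith
  qed
  finally show ?thesis .
qed

lemma xi_beta:
  fixes q q' p p' z z' T R E N :: real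
  assumes q: "\<bar>q\<bar> \<le> T*T" and q': "\<bar>q'\<bar> \<le> T*T" and dp: "\<bar>p - p'\<bar> \<le> 4*R*T*N"
    and dq: "\<bar>q - q'\<bar> \<le> 2*T*N" and z: "\<bar>z\<bar> \<le> R*E" and z': "\<bar>z'\<bar> \<le> R*E"
    and dz: "\<bar>z - z'\<bar> \<le> T*N" and E: "E \<ge> 1" and R: "R \<ge> 0" and T: "T \<ge> 0" and N: "N \<ge> 0"
  shows "\<bar>(p/4 + q\<^sup>2/8 - z*q/2 + z\<^sup>2) - (p'/4 + q'\<^sup>2/8 - z'*q'/2 + z'\<^sup>2)\<bar> \<le> (4*R*T + T*T*T) * E * N"
proof -
  have sq: "\<bar>q + q'\<bar> \<le> 2*(T*T)" using q q' by linarith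
  have sz: "\<bar>z + z'\<bar> \<le> 2*(R*E)" using z z' by linarith
  have a1: "\<bar>(q - q')*(q + q')\<bar> \<le> (2*T*N)*(2*(T*T))" by (rule abs_mult_le2[OF dq sq])
  have a2: "\<bar>z*(q - q')\<bar> \<le> (R*E)*(2*T*N)" by (rule abs_mult_le2[OF z dq])
  have a3: "\<bar>(z - z')*q'\<bar> \<le> (T*N)*(T*T)" by (rule abs_mult_le2[OF dz q'])
  have a4: "\<bar>(z - z')*(z + z')\<bar> \<le> (T*N)*(2*(R*E))" by (rule abs_mult_le2[OF dz sz])
  have e: "(p/4 + q\<^sup>2/8 - z*q/2 + z\<^sup>2) - (p'/4 + q'\<^sup>2/8 - z'*q'/2 + z'\<^sup>2)
     = (p - p')/4 + ((q - q')*(q + q'))/8 - (z*(q - q') + (z - z')*q')/2 + (z - z')*(z + z')"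
    by (simp add: power2_eq_square diff_divide_distrib add_divide_distrib algebra_simps)
  have "\<bar>(p/4 + q\<^sup>2/8 - z*q/2 + z\<^sup>2) - (p'/4 + q'\<^sup>2/8 - z'*q'/2 + z'\<^sup>2)\<bar>
     \<le> \<bar>p - p'\<bar>/4 + \<bar>(q - q')*(q + q')\<bar>/8 + (\<bar>z*(q - q')\<bar> + \<bar>(z - z')*q'\<bar>)/2 + \<bar>(z - z')*(z + z')\<bar>"
  proof -
    have t1: "\<bar>(p - p')/4 + ((q - q')*(q + q'))/8 - (z*(q - q') + (z - z')*q')/2 + (z - z')*(z + z')\<bar>
      \<le> \<bar>(p - p')/4\<bar> + \<bar>((q - q')*(q + q'))/8\<bar> + \<bar>(z*(q - q') + (z - z')*q')/2\<bar> + \<bar>(z - z')*(z + z')\<bar>"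
      by (rule abs4)
    have t2: "\<bar>(z*(q - q') + (z - z')*q')/2\<bar> \<le> (\<bar>z*(q - q')\<bar> + \<bar>(z - z')*q'\<bar>)/2"
      using abs_triangle_ineq[of "z*(q - q')" "(z - z')*q'"] by simp
    have t3: "\<bar>(p - p')/4\<bar> = \<bar>p - p'\<bar>/4" by simp
    have t4: "\<bar>((q - q')*(q + q'))/8\<bar> = \<bar>(q - q')*(q + q')\<bar>/8" by simp
    have "\<bar>(p - p')/4 + ((q - q')*(q + q'))/8 - (z*(q - q') + (z - z')*q')/2 + (z - z')*(z + z')\<bar>
     \<le> \<bar>p - p'\<bar>/4 + \<bar>(q - q')*(q + q')\<bar>/8 + (\<bar>z*(q - q')\<bar> + \<bar>(z - z')*q'\<bar>)/2 + \<bar>(z - z')*(z + z')\<bar>"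
      using t1 t2 t3 t4 by linarith
    thus ?thesis unfolding e .
  qed
  also have "\<dots> \<le> 4*R*T*N/4 + (2*T*N)*(2*(T*T))/8 + ((R*E)*(2*T*N) + (T*N)*(T*T))/2 + (T*N)*(2*(R*E))"
    by (rule lin5[OF dp a1 a2 a3 a4])
  also have "\<dots> = R*T*N + T*T*T*N + 3*(R*T*E*N)" by (simp add: field_simps)
  also have "\<dots> \<le> (4*R*T + T*T*T) * E * N"
  proof -
    have n1: "0 \<le> R*T*N" using R T N by simp
    have n2: "0 \<le> T*T*T*N" using T N by simp
    have c1: "R*T*N \<le> R*T*N*E" using mult_left_mono[OF E n1] by simp
    have c2: "T*T*T*N \<le> T*T*T*N*E" using mult_left_mono[OF E n2] by simp
    have e2: "(4*R*T + T*T*T) * E * N = 4*(R*T*E*N) + T*T*T*N*E" by (simp add: algebra_simps)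
    have e3: "R*T*N*E = R*T*E*N" by (simp add: algebra_simps)
    show ?thesis unfolding e2 using c1 c2 e3 by linarith
  qed
  finally show ?thesis .
qed

context gapsys begin

lemma Xi_lip:
  assumes j: "j \<in> J" and M3: "M3 \<ge> 0" "\<forall>k\<in>J. k \<noteq> j \<longrightarrow> sm j k \<le> M3"
    and M2: "CC j * (1 + (ee j)\<^sup>2) * infsum (sm j) (J - {j}) \<le> M2"
  shows "sg j * \<bar>Xi a b J y j - Xi a b J y' j\<bar>
     \<le> ((4*R0*T1 + T1*T1*T1) * T1 + 2 * (R0*T1*T1 + T1*T1*T1*T1/8 + R0*T1*T1/2 + R0*R0) * (M3/2 + 1) * M2)
       * ynorm a b J y y'"
proof -
  define N where "N = ynorm a b J y y'"
  define S where "S = infsum (sm j) (J - {j})"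
  define E where "E = 1 + ee j"
  define K3 where "K3 = M3/2 + 1"
  define KX where "KX = R0*T1*T1 + T1*T1*T1*T1/8 + R0*T1*T1/2 + R0*R0"
  have N0: "N \<ge> 0" using yn_nonneg by (simp add: N_def)
  have S0: "S \<ge> 0" unfolding S_def by (rule infsum_nonneg) (use sm_nonneg j in auto)
  have E1: "E \<ge> 1" using ee_nonneg[of j] by (simp add: E_def)
  have K30: "K3 \<ge> 0" using M3 by (simp add: K3_def)
  have sj: "sg j > 0" using sgpos[OF j] .
  have cj: "CC j \<ge> 1" using CC_ge1[OF j] .
  have T0: "T1 \<ge> 0" by (rule T1_nonneg)
  have R1: "R0 \<ge> 1" by (rule R0_ge1)
  have KX0: "KX \<ge> 0" unfolding KX_def using T0 R1 by simp
  have z: "\<bar>mu a b y j\<bar> \<le> R0 * E" using absx[OF j mu_in[OF j]] by (simp add: E_def)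
  have z': "\<bar>mu a b y' j\<bar> \<le> R0 * E" using absx[OF j mu_in[OF j]] by (simp add: E_def)
  have dz: "\<bar>mu a b y j - mu a b y' j\<bar> \<le> T1 * N"
    using mu_diff2[OF j, of y y'] bounds1(1)[OF j] N0 mult_right_mono[of "sg j" T1 N]
    by (simp add: N_def)
  have beta: "\<bar>(Q2 a b J y / 4 + (Q1 a b J y)\<^sup>2 / 8 - mu a b y j * Q1 a b J y / 2 + (mu a b y j)\<^sup>2)
      - (Q2 a b J y' / 4 + (Q1 a b J y')\<^sup>2 / 8 - mu a b y' j * Q1 a b J y' / 2 + (mu a b y' j)\<^sup>2)\<bar>
      \<le> (4*R0*T1 + T1*T1*T1) * E * N"
    by (rule xi_beta[OF Q1_bound Q1_bound _ _ z z' dz E1 _ T0 N0])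
       (use Q2_diff[of y y'] Q1_diff[of y y'] R1 in \<open>simp_all add: N_def\<close>)
  have alpha: "\<bar>Q2 a b J y' / 4 + (Q1 a b J y')\<^sup>2 / 8 - mu a b y' j * Q1 a b J y' / 2 + (mu a b y' j)\<^sup>2\<bar>
      \<le> KX * (E * E)"
    unfolding KX_def by (rule xi_alpha[OF Q1_bound Q2_bound z' E1 _ T0]) (use R1 in simp)
  have D: "sg j * \<bar>W a b J y j - W a b J y' j\<bar> \<le> CC j * (K3 * N * S)"
    using W_diff[OF j M3, of y y'] by (simp add: K3_def N_def S_def)
  have main: "sg j * \<bar>Xi a b J y j - Xi a b J y' j\<bar>
      \<le> sg j * ((4*R0*T1 + T1*T1*T1) * E * N) * CC j + (KX * (E * E)) * (CC j * (K3 * N * S))"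
    unfolding Xi_def
    by (rule prod_lip[OF _ _ W_le[OF j] beta alpha D]) (use sj W_pos[OF j, of y] in auto)
  have p1: "sg j * ((4*R0*T1 + T1*T1*T1) * E * N) * CC j \<le> (4*R0*T1 + T1*T1*T1) * T1 * N"
  proof -
    have "sg j * ((4*R0*T1 + T1*T1*T1) * E * N) * CC j = (E * CC j * sg j) * ((4*R0*T1 + T1*T1*T1) * N)"
      by (simp add: mult_ac)
    also have "\<dots> \<le> T1 * ((4*R0*T1 + T1*T1*T1) * N)"
      using T1_ge[OF j] T0 R1 N0 by (intro mult_right_mono) (auto simp: E_def)
    finally show ?thesis by (simp add: mult_ac)
  qed
  have p2: "(KX * (E * E)) * (CC j * (K3 * N * S)) \<le> 2 * KX * K3 * M2 * N"
  proof -
    have "(KX * (E * E)) * (CC j * (K3 * N * S)) = (KX * K3 * N) * ((E * E) * (CC j * S))"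
      by (simp add: mult_ac)
    also have "(E * E) * (CC j * S) \<le> 2 * (1 + (ee j)\<^sup>2) * (CC j * S)"
      using one_e_sq_le[OF ee_nonneg[of j]] cj S0 by (intro mult_right_mono) (auto simp: E_def power2_eq_square)
    also have "2 * (1 + (ee j)\<^sup>2) * (CC j * S) \<le> 2 * M2"
    proof -
      have "2 * (1 + (ee j)\<^sup>2) * (CC j * S) = 2 * (CC j * (1 + (ee j)\<^sup>2) * S)" by (simp only: mult_ac)
      thus ?thesis using M2 unfolding S_def by linarith
    qed
    finally have "(KX * (E * E)) * (CC j * (K3 * N * S)) \<le> (KX * K3 * N) * (2 * M2)"
      using KX0 K30 N0 by (simp add: mult_left_mono)
    thus ?thesis by (simp add: algebra_simps)
  qed
  have fin: "sg j * \<bar>Xi a b J y j - Xi a b J y' j\<bar> \<le> (4*R0*T1 + T1*T1*T1) * T1 * N + 2 * KX * K3 * M2 * N"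
    using main p1 p2 by linarith
  have eq: "(4*R0*T1 + T1*T1*T1) * T1 * N + 2 * KX * K3 * M2 * N
      = ((4*R0*T1 + T1*T1*T1) * T1 + 2 * (R0*T1*T1 + T1*T1*T1*T1/8 + R0*T1*T1/2 + R0*R0) * (M3/2 + 1) * M2) * N"
    by (simp add: K3_def KX_def algebra_simps)
  have "sg j * \<bar>Xi a b J y j - Xi a b J y' j\<bar> \<le> ((4*R0*T1 + T1*T1*T1) * T1 + 2 * (R0*T1*T1 + T1*T1*T1*T1/8 + R0*T1*T1/2 + R0*R0) * (M3/2 + 1) * M2) * N"
    using fin eq by simp
  thus ?thesis unfolding N_def .
qed

end

theorem proposition5p9:
  fixes E :: "real set" and a b :: "nat \<Rightarrow> real" and J :: "nat set" and \<delta> :: real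
  assumes "closed E"
    and "0 \<in> J"
    and "\<forall>j\<in>J. a j < b j"
    and "inj_on (\<lambda>j. {a j<..<b j}) J"
    and "(\<lambda>j. {a j<..<b j}) ` J = {C \<in> components (- E). bounded C}"
    and "\<delta> > 0"
    and "\<forall>k\<in>J. Cc a b J k < \<infinity>"
    and "(\<lambda>k. (1 + eta a b k 0) * real_of_ereal (Cc a b J k) * sqrt (gam a b k)) summable_on J"
    and "\<exists>M. \<forall>j\<in>J.
           (\<lambda>k. (real_of_ereal (Cc a b J j))^3 * (real_of_ereal (Cc a b J k))\<^sup>2
                 * (1 + (eta a b 0 j)\<^sup>2) * sqrt (gam a b j) * sqrt (gam a b k) / eta a b j k)
             summable_on (J - {j}) \<and>
           (\<Sum>\<^sub>\<infinity>k\<in>J - {j}. (real_of_ereal (Cc a b J j))^3 * (real_of_ereal (Cc a b J k))\<^sup>2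
                 * (1 + (eta a b 0 j)\<^sup>2) * sqrt (gam a b j) * sqrt (gam a b k) / eta a b j k) \<le> M"
    and "\<exists>M. \<forall>j\<in>J. \<forall>k\<in>J. k \<noteq> j \<longrightarrow>
           sqrt (gam a b j) * sqrt (gam a b k) \<le> M * (gam a b j powr \<delta> * eta a b j k)"
  shows "(\<exists>L. \<forall>y y'. \<forall>j\<in>J.
            sqrt (gam a b j) * \<bar>Psi a b J y j - Psi a b J y' j\<bar> \<le> L * ynorm a b J y y')
       \<and> (\<exists>L. \<forall>y y'. \<forall>j\<in>J.
            sqrt (gam a b j) * \<bar>Xi a b J y j - Xi a b J y' j\<bar> \<le> L * ynorm a b J y y')"
proof -
  interpret gapsys a b J \<delta>
    by (rule gapsys.intro) (use assms(2,3,6-10) in auto)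
  obtain M2 where M2: "\<And>j. j \<in> J \<Longrightarrow> (sm j) summable_on (J - {j}) \<and>
      CC j * (1 + (ee j)\<^sup>2) * infsum (sm j) (J - {j}) \<le> M2"
    using S2' by blast
  obtain M3 where M3: "M3 \<ge> 0" "\<And>j k. j \<in> J \<Longrightarrow> k \<in> J \<Longrightarrow> k \<noteq> j \<Longrightarrow> sm j k \<le> M3"
    using S3' by blast
  have M3': "\<forall>k\<in>J. k \<noteq> j \<longrightarrow> sm j k \<le> M3" if "j \<in> J" for j using M3 that by auto
  have P: "\<forall>y y'. \<forall>j\<in>J. sqrt (gam a b j) * \<bar>Psi a b J y j - Psi a b J y' j\<bar>
      \<le> (2 * T1 * T1 + (M3/2 + 1) * (T1 * T1 + 2 * R0) * M2) * ynorm a b J y y'"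
  proof (intro allI ballI)
    fix y y' j assume j: "j \<in> J"
    show "sqrt (gam a b j) * \<bar>Psi a b J y j - Psi a b J y' j\<bar>
      \<le> (2 * T1 * T1 + (M3/2 + 1) * (T1 * T1 + 2 * R0) * M2) * ynorm a b J y y'"
      using Psi_lip[OF j M3(1) M3'[OF j], of M2 y y'] M2[OF j] by (simp add: sg_def)
  qed
  have X: "\<forall>y y'. \<forall>j\<in>J. sqrt (gam a b j) * \<bar>Xi a b J y j - Xi a b J y' j\<bar>
      \<le> ((4*R0*T1 + T1*T1*T1) * T1 + 2 * (R0*T1*T1 + T1*T1*T1*T1/8 + R0*T1*T1/2 + R0*R0) * (M3/2 + 1) * M2)
       * ynorm a b J y y'"
  proof (intro allI ballI)
    fix y y' j assume j: "j \<in> J"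
    show "sqrt (gam a b j) * \<bar>Xi a b J y j - Xi a b J y' j\<bar>
      \<le> ((4*R0*T1 + T1*T1*T1) * T1 + 2 * (R0*T1*T1 + T1*T1*T1*T1/8 + R0*T1*T1/2 + R0*R0) * (M3/2 + 1) * M2)
       * ynorm a b J y y'"
      using Xi_lip[OF j M3(1) M3'[OF j], of M2 y y'] M2[OF j] by (simp add: sg_def)
  qed
  show ?thesis using P X by blast
qed

end
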